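(* Consider the one-sample model: for $i\in[m]$ and $j\in[n_i]$, $n_i\ge2$, $X_{ij}=\mu_i+\epsilon_{ij}$ with $\mathbb{E}\epsilon_{ij}=0$, $\mathcal{H}_0=\{i:\mu_i=0\}$. Assume that for each $i\in\mathcal{H}_0$ the errors $\{\epsilon_{ij}\}_{j}$ are i.i.d. conditional on the observations of all other units, with a conditional density symmetric about zero. Let $(U_i,U_i^0)$, $i\in[m]$, be constructed by the SENS algorithm (described in the context, with either option), and suppose $U_i\ne U_i^0$ almost surely for all $i$. Then the quantities $e_i=\frac{m\,\mathbb{I}(G_i\ge\tau)}{1+\sum_{j=1}^m\mathbb{I}(G_j\le-\tau)}$ satisfy $\mathbb{E}\big(\sum_{i\in\mathcal{H}_0}e_i\big)\le m$, and the SENS algorithm controls the false discovery rate at level $\alpha$, i.e. $\mathbb{E}\big[|\mathcal{R}\cap\mathcal{H}_0|/\max\{|\mathcal{R}|,1\}\big]\le\alpha$.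
   Context: SENS algorithm (input: the data, $\alpha\in(0,1)$, option JC or KN). (1) For each $i$, randomly (independently of the data) split $[n_i]$ into $\mathcal{N}_{i1},\mathcal{N}_{i2}$ of sizes $n_{i1}=\lceil n_i/2\rceil$, $n_{i2}=n_i-n_{i1}$; with $\bar X_{ik},S^2_{ik}$ the sample mean and variance over $\mathcal{N}_{ik}$, set $V_i=\bar X_{i1}+\bar X_{i2}$, $V^0_i=\bar X_{i1}-\bar X_{i2}$, and for $n_i\ge4$, $S_i=\sqrt{\frac{n_i}{n_{i1}n_{i2}}\frac{(n_{i1}-1)S^2_{i1}+(n_{i2}-1)S^2_{i2}}{n_i-2}}$, $T_i=\Phi^{-1}\{G_{t,n_i-2}(V_i/S_i)\}$, $T^0_i=\Phi^{-1}\{G_{t,n_i-2}(V^0_i/S_i)\}$ ($\Phi$ the normal CDF, $G_{t,\nu}$ the $t_\nu$ CDF); for $n_i=3$ use $S_{i1}$ in place of $S_i$; for $n_i=2$, $T_i=(X_{i1}+X_{i2})/\sqrt2$, $T_i^0=(X_{i1}-X_{i2})/\sqrt2$. (2) $\hat f_{mix}(t)=\frac1{2m}\sum_i[K_{h}(t-T_i)+K_h(t-T^0_i)]$ with $K_h(t)=h^{-1}K(t/h)$, $K$ a symmetric kernel with $\int K=1,\int tK=0,\int t^2K<\infty$, and bandwidth $h$ invariant under permutations of the $2m$ values $(T_1,\dots,T_m,T_1^0,\dots,T_m^0)$. (3) Option KN: $\tilde T^0_i=T_i$ if $|T_i|\le|T^0_i|$, else $T^0_i$; $\hat f_0(t)=\frac1{2m}[\sum_iK_{h_0}(t-\tilde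 T^0_i)+\sum_iK_{h_0}(t+\tilde T^0_i)]$ with $h_0$ permutation invariant in $(\tilde{\mathbf{T}}^0,-\tilde{\mathbf{T}}^0)$. Option JC: with the pooled sample $(X_1,\dots,X_{2m})=(\mathbf{T},\mathbf{T}^0)$, $\varphi(s)=\frac1{2m}\sum_je^{\mathrm{i}sX_j}$, fixed $\gamma\in(0,1/2)$, $\hat s=\inf\{s\in[0,\log 2m]:|\varphi(s)|=(2m)^{-\gamma}\}$, $\hat\sigma_0^2=-\frac{(d/ds)|\varphi(s)|}{s|\varphi(s)|}$ and $\hat\mu_0=\frac{\mathrm{Re}\varphi\,\mathrm{Im}\varphi'-\mathrm{Re}\varphi'\,\mathrm{Im}\varphi}{|\varphi|^2}$ evaluated at $s=\hat s$; $\hat f_0$ is the $\mathcal N(\hat\mu_0,\hat\sigma_0^2)$ density. (4) $g=\hat f_0/\hat f_{mix}$, $U_i=g(T_i)$, $U^0_i=g(T^0_i)$. (5) $G_i=\mathrm{sign}(U^0_i-U_i)[\exp(-U_i)\vee\exp(-U^0_i)]$. (6) $\tau=\inf\{\lambda\in\{|G_i|\}:\frac{1+\sum_i\mathbb{I}(G_i\le-\lambda)}{\sum_i\mathbb{I}(G_i\ge\lambda)}\le\alpha\}$ ($\infty$ if empty). (7) Output $\mathcal{R}=\{i:G_i\ge\tau\}$. *)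

theory Defs
  imports "HOL-Probability.Probability"
begin

definition t_density :: "real \<Rightarrow> real \<Rightarrow> real" where
  "t_density \<nu> x = Gamma ((\<nu> + 1) / 2) / (sqrt (\<nu> * pi) * Gamma (\<nu> / 2))
                     * (1 + x\<^sup>2 / \<nu>) powr (- (\<nu> + 1) / 2)"

definition t_cdf :: "real \<Rightarrow> real \<Rightarrow> real" where
  "t_cdf \<nu> x = (\<integral>y. indicator {..x} y * t_density \<nu> y \<partial>lborel)"

definition Phi :: "real \<Rightarrow> real" where
  "Phi x = (\<integral>y. indicator {..x} y * std_normal_density y \<partial>lborel)"

definition Phi_inv :: "real \<Rightarrow> real" where
  "Phi_inv p = (THE x. Phi x = p)"

section \<open>Step 1: per-unit statistics\<close>

text \<open>Data: \<open>x (i,j)\<close> is observation \<open>j < n i\<close> of unit \<open>i < m\<close> (0-indexed).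
  Split: \<open>s i \<subseteq> {..<n i}\<close> is \<open>N_i1\<close>, its complement in \<open>{..<n i}\<close> is \<open>N_i2\<close>.\<close>

definition smean :: "(nat \<times> nat \<Rightarrow> real) \<Rightarrow> nat \<Rightarrow> nat set \<Rightarrow> real" where
  "smean x i A = (\<Sum>j\<in>A. x (i, j)) / real (card A)"

definition svar :: "(nat \<times> nat \<Rightarrow> real) \<Rightarrow> nat \<Rightarrow> nat set \<Rightarrow> real" where
  "svar x i A = (\<Sum>j\<in>A. (x (i, j) - smean x i A)\<^sup>2) / (real (card A) - 1)"

definition grp2 :: "(nat \<Rightarrow> nat) \<Rightarrow> (nat \<Rightarrow> nat set) \<Rightarrow> nat \<Rightarrow> nat set" where
  "grp2 n s i = {..<n i} - s i"

definition Vstat :: "(nat \<Rightarrow> nat) \<Rightarrow> (nat \<times> nat \<Rightarrow> real) \<Rightarrow> (nat \<Rightarrow> nat set) \<Rightarrow> nat \<Rightarrow> real" where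
  "Vstat n x s i = smean x i (s i) + smean x i (grp2 n s i)"

definition V0stat :: "(nat \<Rightarrow> nat) \<Rightarrow> (nat \<times> nat \<Rightarrow> real) \<Rightarrow> (nat \<Rightarrow> nat set) \<Rightarrow> nat \<Rightarrow> real" where
  "V0stat n x s i = smean x i (s i) - smean x i (grp2 n s i)"

definition Sstat :: "(nat \<Rightarrow> nat) \<Rightarrow> (nat \<times> nat \<Rightarrow> real) \<Rightarrow> (nat \<Rightarrow> nat set) \<Rightarrow> nat \<Rightarrow> real" where
  "Sstat n x s i =
     (let n1 = real (card (s i)); n2 = real (card (grp2 n s i)); N = real (n i) in
      if n i \<ge> 4 then
        sqrt (N / (n1 * n2) * (((n1 - 1) * svar x i (s i) + (n2 - 1) * svar x i (grp2 n s i)) / (N - 2)))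
      else sqrt (svar x i (s i)))"

definition Tstat :: "(nat \<Rightarrow> nat) \<Rightarrow> (nat \<times> nat \<Rightarrow> real) \<Rightarrow> (nat \<Rightarrow> nat set) \<Rightarrow> nat \<Rightarrow> real" where
  "Tstat n x s i =
     (if n i = 2 then (x (i, 0) + x (i, 1)) / sqrt 2
      else Phi_inv (t_cdf (real (n i) - 2) (Vstat n x s i / Sstat n x s i)))"

definition T0stat :: "(nat \<Rightarrow> nat) \<Rightarrow> (nat \<times> nat \<Rightarrow> real) \<Rightarrow> (nat \<Rightarrow> nat set) \<Rightarrow> nat \<Rightarrow> real" where
  "T0stat n x s i =
     (if n i = 2 then (x (i, 0) - x (i, 1)) / sqrt 2
      else Phi_inv (t_cdf (real (n i) - 2) (V0stat n x s i / Sstat n x s i)))"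

section \<open>Step 2: mixture density estimate\<close>

definition pooled :: "nat \<Rightarrow> (nat \<Rightarrow> real) \<Rightarrow> (nat \<Rightarrow> real) \<Rightarrow> nat \<Rightarrow> real" where
  "pooled m a b = restrict (\<lambda>k. if k < m then a k else b (k - m)) {..<2*m}"

definition Kh :: "(real \<Rightarrow> real) \<Rightarrow> real \<Rightarrow> real \<Rightarrow> real" where
  "Kh K h t = K (t / h) / h"

definition fmix_hat :: "(real \<Rightarrow> real) \<Rightarrow> ((nat \<Rightarrow> real) \<Rightarrow> real) \<Rightarrow> nat
                        \<Rightarrow> (nat \<Rightarrow> real) \<Rightarrow> (nat \<Rightarrow> real) \<Rightarrow> real \<Rightarrow> real" where
  "fmix_hat K hsel m T T0 t =
     (let h = hsel (pooled m T T0) in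
      (\<Sum>i<m. Kh K h (t - T i) + Kh K h (t - T0 i)) / (2 * real m))"

section \<open>Step 3: null density estimate\<close>

datatype sens_option = JC | KN

definition Ttil :: "(nat \<Rightarrow> real) \<Rightarrow> (nat \<Rightarrow> real) \<Rightarrow> nat \<Rightarrow> real" where
  "Ttil T T0 i = (if \<bar>T i\<bar> \<le> \<bar>T0 i\<bar> then T i else T0 i)"

definition f0_KN :: "(real \<Rightarrow> real) \<Rightarrow> ((nat \<Rightarrow> real) \<Rightarrow> real) \<Rightarrow> nat
                     \<Rightarrow> (nat \<Rightarrow> real) \<Rightarrow> (nat \<Rightarrow> real) \<Rightarrow> real \<Rightarrow> real" where
  "f0_KN K h0sel m T T0 t =
     (let R = Ttil T T0; h0 = h0sel (pooled m R (\<lambda>i. - R i)) in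
      ((\<Sum>i<m. Kh K h0 (t - R i)) + (\<Sum>i<m. Kh K h0 (t + R i))) / (2 * real m))"

definition emp_cf :: "nat \<Rightarrow> (nat \<Rightarrow> real) \<Rightarrow> real \<Rightarrow> complex" where
  "emp_cf N w s = (\<Sum>k<N. exp (\<i> * complex_of_real (s * w k))) / of_nat N"

definition f0_JC :: "real \<Rightarrow> nat \<Rightarrow> (nat \<Rightarrow> real) \<Rightarrow> (nat \<Rightarrow> real) \<Rightarrow> real \<Rightarrow> real" where
  "f0_JC \<gamma> m T T0 t =
     (let N = 2 * m; w = pooled m T T0; \<phi> = emp_cf N w;
          sh = Inf {s \<in> {0..ln (real N)}. cmod (\<phi> s) = real N powr (- \<gamma>)};
          \<phi>1 = \<phi> sh; \<phi>d = vector_derivative \<phi> (at sh);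
          sig2 = - deriv (\<lambda>s. cmod (\<phi> s)) sh / (sh * cmod \<phi>1);
          mu = (Re \<phi>1 * Im \<phi>d - Re \<phi>d * Im \<phi>1) / (cmod \<phi>1)\<^sup>2
      in normal_density mu (sqrt sig2) t)"

definition f0_hat :: "sens_option \<Rightarrow> (real \<Rightarrow> real) \<Rightarrow> ((nat \<Rightarrow> real) \<Rightarrow> real) \<Rightarrow> real \<Rightarrow> nat
                      \<Rightarrow> (nat \<Rightarrow> real) \<Rightarrow> (nat \<Rightarrow> real) \<Rightarrow> real \<Rightarrow> real" where
  "f0_hat opt K h0sel \<gamma> m T T0 =
     (case opt of KN \<Rightarrow> f0_KN K h0sel m T T0 | JC \<Rightarrow> f0_JC \<gamma> m T T0)"

section \<open>Steps 4--7\<close>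

text \<open>The random input is \<open>\<omega> = (x, s)\<close>: data and split.\<close>

definition SENS_g :: "sens_option \<Rightarrow> (real \<Rightarrow> real) \<Rightarrow> ((nat \<Rightarrow> real) \<Rightarrow> real) \<Rightarrow> ((nat \<Rightarrow> real) \<Rightarrow> real)
                      \<Rightarrow> real \<Rightarrow> (nat \<Rightarrow> nat) \<Rightarrow> nat \<Rightarrow> (nat \<times> nat \<Rightarrow> real) \<times> (nat \<Rightarrow> nat set) \<Rightarrow> real \<Rightarrow> real" where
  "SENS_g opt K hsel h0sel \<gamma> n m \<omega> t =
     (let T = Tstat n (fst \<omega>) (snd \<omega>); T0 = T0stat n (fst \<omega>) (snd \<omega>) in
      f0_hat opt K h0sel \<gamma> m T T0 t / fmix_hat K hsel m T T0 t)"

definition SENS_U :: "sens_option \<Rightarrow> (real \<Rightarrow> real) \<Rightarrow> ((nat \<Rightarrow> real) \<Rightarrow> real) \<Rightarrow> ((nat \<Rightarrow> real) \<Rightarrow> real)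
                      \<Rightarrow> real \<Rightarrow> (nat \<Rightarrow> nat) \<Rightarrow> nat \<Rightarrow> (nat \<times> nat \<Rightarrow> real) \<times> (nat \<Rightarrow> nat set) \<Rightarrow> nat \<Rightarrow> real" where
  "SENS_U opt K hsel h0sel \<gamma> n m \<omega> i =
     SENS_g opt K hsel h0sel \<gamma> n m \<omega> (Tstat n (fst \<omega>) (snd \<omega>) i)"

definition SENS_U0 :: "sens_option \<Rightarrow> (real \<Rightarrow> real) \<Rightarrow> ((nat \<Rightarrow> real) \<Rightarrow> real) \<Rightarrow> ((nat \<Rightarrow> real) \<Rightarrow> real)
                      \<Rightarrow> real \<Rightarrow> (nat \<Rightarrow> nat) \<Rightarrow> nat \<Rightarrow> (nat \<times> nat \<Rightarrow> real) \<times> (nat \<Rightarrow> nat set) \<Rightarrow> nat \<Rightarrow> real" where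
  "SENS_U0 opt K hsel h0sel \<gamma> n m \<omega> i =
     SENS_g opt K hsel h0sel \<gamma> n m \<omega> (T0stat n (fst \<omega>) (snd \<omega>) i)"

definition SENS_G :: "sens_option \<Rightarrow> (real \<Rightarrow> real) \<Rightarrow> ((nat \<Rightarrow> real) \<Rightarrow> real) \<Rightarrow> ((nat \<Rightarrow> real) \<Rightarrow> real)
                      \<Rightarrow> real \<Rightarrow> (nat \<Rightarrow> nat) \<Rightarrow> nat \<Rightarrow> (nat \<times> nat \<Rightarrow> real) \<times> (nat \<Rightarrow> nat set) \<Rightarrow> nat \<Rightarrow> real" where
  "SENS_G opt K hsel h0sel \<gamma> n m \<omega> i =
     (let U = SENS_U opt K hsel h0sel \<gamma> n m \<omega> i; U0 = SENS_U0 opt K hsel h0sel \<gamma> n m \<omega> i in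
      sgn (U0 - U) * max (exp (- U)) (exp (- U0)))"

text \<open>The condition
  \<open>(1 + #{G_i \<le> -\<lambda>}) / #{G_i \<ge> \<lambda>} \<le> \<alpha>\<close> is written multiplicatively, which avoids the
  HOL convention \<open>x / 0 = 0\<close> (a zero denominator makes the ratio \<open>+\<infinity>\<close>, i.e. the condition false).\<close>
definition sens_tau :: "real \<Rightarrow> nat \<Rightarrow> (nat \<Rightarrow> real) \<Rightarrow> ereal" where
  "sens_tau \<alpha> m G =
     (let C = {l \<in> (\<lambda>i. \<bar>G i\<bar>) ` {..<m}.
                 1 + real (card {i \<in> {..<m}. G i \<le> - l}) \<le> \<alpha> * real (card {i \<in> {..<m}. G i \<ge> l})}
      in if C = {} then \<infinity> else ereal (Min C))"

definition sens_rej :: "real \<Rightarrow> nat \<Rightarrow> (nat \<Rightarrow> real) \<Rightarrow> nat set" where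
  "sens_rej \<alpha> m G = {i \<in> {..<m}. ereal (G i) \<ge> sens_tau \<alpha> m G}"

definition sens_e :: "real \<Rightarrow> nat \<Rightarrow> (nat \<Rightarrow> real) \<Rightarrow> nat \<Rightarrow> real" where
  "sens_e \<alpha> m G i =
     real m * (if ereal (G i) \<ge> sens_tau \<alpha> m G then 1 else 0)
       / (1 + real (card {j \<in> {..<m}. ereal (G j) \<le> - sens_tau \<alpha> m G}))"

definition FDP :: "nat set \<Rightarrow> nat set \<Rightarrow> real" where
  "FDP R H0 = real (card (R \<inter> H0)) / real (max (card R) 1)"

definition obs_idx :: "nat \<Rightarrow> (nat \<Rightarrow> nat) \<Rightarrow> (nat \<times> nat) set" where
  "obs_idx m n = {(i, j). i < m \<and> j < n i}"

definition other_idx :: "nat \<Rightarrow> (nat \<Rightarrow> nat) \<Rightarrow> nat \<Rightarrow> (nat \<times> nat) set" where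
  "other_idx m n i = {(k, j). k < m \<and> j < n k \<and> k \<noteq> i}"

definition combine :: "(nat \<Rightarrow> nat) \<Rightarrow> nat \<Rightarrow> (nat \<times> nat \<Rightarrow> real) \<Rightarrow> (nat \<Rightarrow> real) \<Rightarrow> nat \<times> nat \<Rightarrow> real" where
  "combine n i y z = (\<lambda>(k, j). if k = i \<and> j < n i then z j else y (k, j))"

end

theory Submission
  imports Defs
begin

definition Vp :: "nat set \<Rightarrow> (nat \<Rightarrow> real) \<Rightarrow> real \<Rightarrow> nat" where
  "Vp S a l = card {i\<in>S. l \<le> a i}"

definition CSet :: "nat set \<Rightarrow> (nat \<Rightarrow> real) \<Rightarrow> real set \<Rightarrow> (real \<Rightarrow> nat \<Rightarrow> nat \<Rightarrow> bool) \<Rightarrow> nat set \<Rightarrow> real set" where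
  "CSet H a L c S = {l\<in>L. c l (Vp S a l) (Vp (H - S) a l)}"

definition Mval :: "nat set \<Rightarrow> (nat \<Rightarrow> real) \<Rightarrow> real set \<Rightarrow> (real \<Rightarrow> nat \<Rightarrow> nat \<Rightarrow> bool) \<Rightarrow> nat set \<Rightarrow> real" where
  "Mval H a L c S = (if CSet H a L c S = {} then 0 else
     real (Vp S a (Min (CSet H a L c S))) / (1 + real (Vp (H - S) a (Min (CSet H a L c S)))))"

lemma Mval_nonneg: "0 \<le> Mval H a L c S"
  by (simp add: Mval_def)

lemma arith_step:
  fixes k q :: nat
  shows "real ((k choose q)) * real q / (1 + real k - real q)
       + real (k choose Suc q) * real (Suc q) / (1 + real k - real (Suc q))
       \<le> real (Suc k choose Suc q) * real (Suc q) / (1 + real (Suc k) - real (Suc q))"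
proof (cases "q < k")
  case True
  have e1: "real (Suc k choose Suc q) * real (Suc q) = real (Suc k) * real (k choose q)"
    by (metis Suc_times_binomial of_nat_mult mult.commute)
  have e2: "real (k choose Suc q) * real (Suc q) = real (k - q) * real (k choose q)"
    by (metis binomial_absorb_comp of_nat_mult mult.commute
        diff_Suc_1 times_binomial_minus1_eq
        zero_less_Suc)
  define b where "b = real (k choose q)"
  have d: "1 + real k - real q > 0" "1 + real k - real (Suc q) > 0" using True by auto
  have kq: "real (k - q) = 1 + real k - real (Suc q)" using True by auto
  have "real ((k choose q)) * real q / (1 + real k - real q)
       + real (k choose Suc q) * real (Suc q) / (1 + real k - real (Suc q))
       = b * real q / (1 + real k - real q) + b"
    using e2 kq d by (simp add: b_def)
  also have "\<dots> = b * real (Suc k) / (1 + real k - real q)"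
    using d by (simp add: field_simps)
  also have "\<dots> = real (Suc k choose Suc q) * real (Suc q) / (1 + real (Suc k) - real (Suc q))"
    using e1 by (simp add: b_def mult.commute)
  finally show ?thesis by simp
next
  case False
  show ?thesis
  proof (cases "q = k")
    case True
    then show ?thesis by simp
  next
    case False
    with \<open>\<not> q < k\<close> have "k < q" by simp
    then have "k choose q = 0" "k choose Suc q = 0" "Suc k choose Suc q = 0" by simp_all
    then show ?thesis by (simp only: of_nat_0 mult_zero_left div_0 add_0)
  qed
qed

lemma comb_main:
  assumes "finite H" "card H = k" "finite L"
  shows "(\<Sum>S\<in>{S. S \<subseteq> H \<and> card S = p}. Mval H a L c S)
           \<le> real (k choose p) * real p / (1 + real k - real p)"
  using assms
proof (induction k arbitrary: H L c p)
  case 0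
  then have H: "H = {}" by simp
  have "(\<Sum>S\<in>{S. S \<subseteq> H \<and> card S = p}. Mval H a L c S) = 0"
    by (rule sum.neutral) (auto simp: H Mval_def Vp_def)
  moreover have "real (0 choose p) * real p / (1 + real 0 - real p) = 0"
    by (cases p) (simp_all only: binomial_0_Suc of_nat_0 mult_zero_left mult_zero_right div_0)
  ultimately show ?case by (simp only: order_refl)
next
  case (Suc k)
  have finH: "finite H" and cardH: "card H = Suc k" and finL: "finite L" by fact+
  then have "H \<noteq> {}" by auto
  then have "Min (a ` H) \<in> a ` H" using finH by (intro Min_in) auto
  then obtain i0 where i0H: "i0 \<in> H" and i0eq: "a i0 = Min (a ` H)" by auto
  have i0min: "\<forall>i\<in>H. a i0 \<le> a i" using finH i0eq by auto
  define H' where "H' = H - {i0}"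
  have finH': "finite H'" and cardH': "card H' = k"
    using finH cardH i0H by (auto simp: H'_def)
  define L2 where "L2 = {l\<in>L. a i0 < l}"
  have finL2: "finite L2" using finL by (auto simp: L2_def)
  define Stop where "Stop q \<longleftrightarrow> (\<exists>l\<in>L. l \<le> a i0 \<and> c l q (Suc k - q))" for q
  have F1: "Vp S a l = card S \<and> Vp (H - S) a l = Suc k - card S"
    if S: "S \<subseteq> H" and l: "l \<le> a i0" for S l
  proof -
    have "{i\<in>S. l \<le> a i} = S" using S l i0min by force
    moreover have "{i\<in>H - S. l \<le> a i} = H - S" using l i0min by force
    moreover have "card (H - S) = Suc k - card S"
      using S finH cardH by (simp add: card_Diff_subset finite_subset)
    ultimately show ?thesis by (simp add: Vp_def)
  qed
  have F2: "Vp S a l = Vp (S - {i0}) a l \<and> Vp (H - S) a l = Vp (H' - (S - {i0})) a l"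
    if S: "S \<subseteq> H" and l: "a i0 < l" for S l
  proof -
    have "{i\<in>S. l \<le> a i} = {i\<in>S - {i0}. l \<le> a i}" using l by force
    moreover have "{i\<in>H - S. l \<le> a i} = {i\<in>H' - (S - {i0}). l \<le> a i}"
      using l by (force simp: H'_def)
    ultimately show ?thesis by (simp add: Vp_def)
  qed
  have F3: "Mval H a L c S = real (card S) / (1 + real (Suc k) - real (card S))"
    if S: "S \<subseteq> H" and st: "Stop (card S)" for S
  proof -
    from st obtain l where l: "l \<in> L" "l \<le> a i0" "c l (card S) (Suc k - card S)"
      by (auto simp: Stop_def)
    let ?C = "CSet H a L c S"
    have lC: "l \<in> ?C" using l F1[OF S l(2)] by (simp add: CSet_def)
    have finC: "finite ?C" using finL by (simp add: CSet_def)
    have ne: "?C \<noteq> {}" using lC by auto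
    have MinC: "Min ?C \<in> ?C" using finC ne by (rule Min_in)
    have "Min ?C \<le> l" using finC lC by simp
    then have "Min ?C \<le> a i0" using l by simp
    from F1[OF S this] have "Vp S a (Min ?C) = card S" "Vp (H - S) a (Min ?C) = Suc k - card S"
      by auto
    moreover have "card S \<le> Suc k" using S finH cardH card_mono by metis
    ultimately show ?thesis using ne by (simp add: Mval_def of_nat_diff)
  qed
  have F4: "Mval H a L c S = Mval H' a L2 c (S - {i0})"
    if S: "S \<subseteq> H" and st: "\<not> Stop (card S)" for S
  proof -
    have CE: "CSet H a L c S = CSet H' a L2 c (S - {i0})"
    proof (rule set_eqI)
      fix l
      show "l \<in> CSet H a L c S \<longleftrightarrow> l \<in> CSet H' a L2 c (S - {i0})"
      proof (cases "l \<le> a i0")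
        case True
        then have "l \<notin> CSet H a L c S" using st F1[OF S True] by (auto simp: CSet_def Stop_def)
        moreover have "l \<notin> CSet H' a L2 c (S - {i0})" using True by (auto simp: CSet_def L2_def)
        ultimately show ?thesis by simp
      next
        case False
        then have "a i0 < l" by simp
        from F2[OF S this] show ?thesis using \<open>a i0 < l\<close> by (auto simp: CSet_def L2_def)
      qed
    qed
    show ?thesis
    proof (cases "CSet H a L c S = {}")
      case True
      then show ?thesis using CE by (simp add: Mval_def)
    next
      case False
      have finC: "finite (CSet H a L c S)" using finL by (simp add: CSet_def)
      have "Min (CSet H a L c S) \<in> CSet H' a L2 c (S - {i0})"
        using Min_in[OF finC False] CE by simp
      then have "a i0 < Min (CSet H a L c S)" by (simp add: CSet_def L2_def)
      from F2[OF S this] show ?thesis using CE False by (simp add: Mval_def)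
    qed
  qed
  define A where "A = {S. S \<subseteq> H \<and> card S = p}"
  have finA: "finite A" using finH by (simp add: A_def)
  show ?case
  proof (cases "Stop p")
    case True
    have "(\<Sum>S\<in>A. Mval H a L c S) = (\<Sum>S\<in>A. real p / (1 + real (Suc k) - real p))"
      by (rule sum.cong) (auto simp: A_def True F3)
    also have "\<dots> = real (card A) * (real p / (1 + real (Suc k) - real p))" by simp
    also have "card A = Suc k choose p" using n_subsets[OF finH, of p] cardH by (simp add: A_def)
    finally show ?thesis by (simp add: A_def)
  next
    case False
    define f where "f S = Mval H' a L2 c S" for S
    have "(\<Sum>S\<in>A. Mval H a L c S) = (\<Sum>S\<in>A. f (S - {i0}))"
      by (rule sum.cong) (auto simp: A_def False F4 f_def)
    also have "\<dots> = (\<Sum>S\<in>{S\<in>A. i0 \<in> S}. f (S - {i0})) + (\<Sum>S\<in>{S\<in>A. i0 \<notin> S}. f (S - {i0}))"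
    proof -
      have Aeq: "A = {S\<in>A. i0 \<in> S} \<union> {S\<in>A. i0 \<notin> S}" by blast
      show ?thesis
        by (subst Aeq, rule sum.union_disjoint) (use finA in auto)
    qed
    also have "(\<Sum>S\<in>{S\<in>A. i0 \<notin> S}. f (S - {i0})) = (\<Sum>S\<in>{S. S \<subseteq> H' \<and> card S = p}. f S)"
    proof -
      have "{S\<in>A. i0 \<notin> S} = {S. S \<subseteq> H' \<and> card S = p}" by (auto simp: A_def H'_def)
      moreover have "f (S - {i0}) = f S" if "S \<in> {S. S \<subseteq> H' \<and> card S = p}" for S
      proof -
        have "i0 \<notin> S" using that by (auto simp: H'_def)
        then show ?thesis by simp
      qed
      ultimately show ?thesis by (metis (no_types, lifting) sum.cong)
    qed
    also have "\<dots> \<le> real (k choose p) * real p / (1 + real k - real p)"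
      unfolding f_def by (rule Suc.IH[OF finH' cardH' finL2])
    finally have main: "(\<Sum>S\<in>A. Mval H a L c S)
       \<le> (\<Sum>S\<in>{S\<in>A. i0 \<in> S}. f (S - {i0})) + real (k choose p) * real p / (1 + real k - real p)"
      by simp
    show ?thesis
    proof (cases p)
      case 0
      then have "{S\<in>A. i0 \<in> S} = {}" using finH by (auto simp: A_def dest: finite_subset)
      then have "(\<Sum>S\<in>{S\<in>A. i0 \<in> S}. f (S - {i0})) = 0" by (simp only: sum.empty)
      moreover have "real (k choose p) * real p / (1 + real k - real p) = 0" using 0 by simp
      ultimately have "(\<Sum>S\<in>A. Mval H a L c S) \<le> 0" using main by linarith
      moreover have "real (Suc k choose p) * real p / (1 + real (Suc k) - real p) = 0" using 0 by simp
      ultimately show ?thesis by (simp only: A_def)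
    next
      case (Suc q)
      have "{S\<in>A. i0 \<in> S} = insert i0 ` {S. S \<subseteq> H' \<and> card S = q}"
      proof (rule set_eqI, rule iffI)
        fix S assume "S \<in> {S\<in>A. i0 \<in> S}"
        then have S: "S \<subseteq> H" "card S = Suc q" "i0 \<in> S" by (auto simp: A_def Suc)
        then have "S - {i0} \<subseteq> H'" "card (S - {i0}) = q" by (auto simp: H'_def)
        moreover have "S = insert i0 (S - {i0})" using S by auto
        ultimately show "S \<in> insert i0 ` {S. S \<subseteq> H' \<and> card S = q}" by blast
      next
        fix S assume "S \<in> insert i0 ` {S. S \<subseteq> H' \<and> card S = q}"
        then obtain S' where S': "S' \<subseteq> H'" "card S' = q" "S = insert i0 S'" by auto
        have "finite S'" using S' finH' finite_subset by blast
        moreover have "i0 \<notin> S'" using S' by (auto simp: H'_def)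
        ultimately show "S \<in> {S\<in>A. i0 \<in> S}" using S' i0H by (auto simp: A_def H'_def Suc)
      qed
      moreover have "inj_on (insert i0) {S. S \<subseteq> H' \<and> card S = q}"
      proof (rule inj_onI)
        fix X Y assume X: "X \<in> {S. S \<subseteq> H' \<and> card S = q}" and Y: "Y \<in> {S. S \<subseteq> H' \<and> card S = q}"
          and e: "insert i0 X = insert i0 Y"
        have "i0 \<notin> X" "i0 \<notin> Y" using X Y by (auto simp: H'_def)
        then have "X = insert i0 X - {i0}" "Y = insert i0 Y - {i0}" by auto
        with e show "X = Y" by simp
      qed
      ultimately have "(\<Sum>S\<in>{S\<in>A. i0 \<in> S}. f (S - {i0})) = (\<Sum>S\<in>{S. S \<subseteq> H' \<and> card S = q}. f (insert i0 S - {i0}))"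
        by (simp add: sum.reindex)
      also have "\<dots> = (\<Sum>S\<in>{S. S \<subseteq> H' \<and> card S = q}. f S)"
      proof (rule sum.cong)
        fix S assume "S \<in> {S. S \<subseteq> H' \<and> card S = q}"
        then have "i0 \<notin> S" by (auto simp: H'_def)
        then show "f (insert i0 S - {i0}) = f S" by simp
      qed simp
      also have "\<dots> \<le> real (k choose q) * real q / (1 + real k - real q)"
        unfolding f_def by (rule Suc.IH[OF finH' cardH' finL2])
      finally have "(\<Sum>S\<in>A. Mval H a L c S) \<le> real (k choose q) * real q / (1 + real k - real q)
             + real (k choose Suc q) * real (Suc q) / (1 + real k - real (Suc q))"
        using main Suc by simp
      also have "\<dots> \<le> real (Suc k choose Suc q) * real (Suc q) / (1 + real (Suc k) - real (Suc q))"
        by (rule arith_step)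
      finally show ?thesis by (simp add: A_def Suc)
    qed
  qed
qed

lemma choose_shift_bound:
  fixes k q :: nat
  shows "real (k choose Suc q) * real (Suc q) / (1 + real k - real (Suc q)) \<le> real (k choose q)"
proof (cases "q < k")
  case True
  have e2: "real (k choose Suc q) * real (Suc q) = real (k - q) * real (k choose q)"
    by (metis binomial_absorb_comp of_nat_mult mult.commute diff_Suc_1 times_binomial_minus1_eq zero_less_Suc)
  have "real (k - q) = 1 + real k - real (Suc q)" "1 + real k - real (Suc q) > 0" using True by auto
  then show ?thesis using e2 by simp
next
  case False
  then have "k choose Suc q = 0" by simp
  then show ?thesis by (simp only: of_nat_0 mult_zero_left div_0 of_nat_0_le_iff)
qed

lemma comb_total:
  assumes "finite H" "finite L"
  shows "(\<Sum>S\<in>Pow H. Mval H a L c S) \<le> 2 ^ card H"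
proof -
  define k where "k = card H"
  define g where "g p = real (k choose p) * real p / (1 + real k - real p)" for p
  have "(\<Sum>S\<in>Pow H. Mval H a L c S) = (\<Sum>p\<in>{..k}. \<Sum>S\<in>{S\<in>Pow H. card S = p}. Mval H a L c S)"
    using assms(1) by (subst sum.group[symmetric, of "Pow H" "{..k}" card]) 
      (auto simp: k_def card_mono)
  also have "\<dots> \<le> (\<Sum>p\<in>{..k}. g p)"
  proof (rule sum_mono)
    fix p
    have "{S\<in>Pow H. card S = p} = {S. S \<subseteq> H \<and> card S = p}" by auto
    then show "(\<Sum>S\<in>{S\<in>Pow H. card S = p}. Mval H a L c S) \<le> g p"
      using comb_main[OF assms(1) k_def[symmetric] assms(2)] by (simp add: g_def)
  qed
  also have "\<dots> = (\<Sum>p\<in>{..Suc k}. g p)"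
    by (simp add: g_def)
  also have "\<dots> = g 0 + (\<Sum>q\<in>{..k}. g (Suc q))"
    by (rule sum.atMost_Suc_shift)
  also have "\<dots> \<le> 0 + (\<Sum>q\<in>{..k}. real (k choose q))"
  proof (intro add_mono sum_mono)
    show "g 0 \<le> 0" by (simp add: g_def)
    fix q show "g (Suc q) \<le> real (k choose q)" unfolding g_def by (rule choose_shift_bound)
  qed
  also have "\<dots> = 2 ^ k"
    using choose_row_sum[of k] by (simp flip: of_nat_sum)
  finally show ?thesis by (simp add: k_def)
qed

definition posset :: "nat set \<Rightarrow> (nat \<Rightarrow> real) \<Rightarrow> nat set" where
  "posset H G = {i\<in>H. 0 < G i}"

definition cfun :: "real \<Rightarrow> nat \<Rightarrow> nat set \<Rightarrow> (nat \<Rightarrow> real) \<Rightarrow> real \<Rightarrow> nat \<Rightarrow> nat \<Rightarrow> bool" where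
  "cfun \<alpha> m H G l vp vm \<longleftrightarrow>
     1 + real (card {j\<in>{..<m} - H. G j \<le> - l} + vm) \<le> \<alpha> * real (card {j\<in>{..<m} - H. l \<le> G j} + vp)"

definition Lset :: "nat \<Rightarrow> (nat \<Rightarrow> real) \<Rightarrow> real set" where
  "Lset m G = (\<lambda>i. \<bar>G i\<bar>) ` {..<m}"

abbreviation MG where
  "MG \<alpha> m H G \<equiv> Mval H (\<lambda>i. \<bar>G i\<bar>) (Lset m G) (cfun \<alpha> m H G) (posset H G)"

lemma count_split_neg:
  assumes H: "H \<subseteq> {..<m}" and nz: "\<forall>i<m. G i \<noteq> 0" and l: "0 < l"
  shows "card {i\<in>{..<m}. G i \<le> - l} = card {j\<in>{..<m} - H. G j \<le> - l}
           + Vp (H - posset H G) (\<lambda>i. \<bar>G i\<bar>) l"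
proof -
  let ?A = "{j\<in>{..<m} - H. G j \<le> - l}" and ?B = "{i\<in>H - posset H G. l \<le> \<bar>G i\<bar>}"
  have e: "{i\<in>{..<m}. G i \<le> - l} = ?A \<union> ?B"
    using H nz l by (auto simp: posset_def)
  have f1: "finite ?A" by (rule finite_subset[of _ "{..<m}"]) auto
  have f2: "finite ?B" by (rule finite_subset[of _ "{..<m}"]) (use H in auto)
  have d: "?A \<inter> ?B = {}" by auto
  show ?thesis unfolding e Vp_def by (rule card_Un_disjoint[OF f1 f2 d])
qed

lemma count_split_pos:
  assumes H: "H \<subseteq> {..<m}" and nz: "\<forall>i<m. G i \<noteq> 0" and l: "0 < l"
  shows "card {i\<in>{..<m}. l \<le> G i} = card {j\<in>{..<m} - H. l \<le> G j}
           + Vp (posset H G) (\<lambda>i. \<bar>G i\<bar>) l"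
proof -
  let ?A = "{j\<in>{..<m} - H. l \<le> G j}" and ?B = "{i\<in>posset H G. l \<le> \<bar>G i\<bar>}"
  have e: "{i\<in>{..<m}. l \<le> G i} = ?A \<union> ?B"
    using H nz l by (auto simp: posset_def)
  have f1: "finite ?A" by (rule finite_subset[of _ "{..<m}"]) auto
  have f2: "finite ?B" by (rule finite_subset[of _ "{..<m}"]) (use H in \<open>auto simp: posset_def\<close>)
  have d: "?A \<inter> ?B = {}" by (auto simp: posset_def)
  show ?thesis unfolding e Vp_def by (rule card_Un_disjoint[OF f1 f2 d])
qed

lemma tauset_eq:
  assumes H: "H \<subseteq> {..<m}" and nz: "\<forall>i<m. G i \<noteq> 0"
  shows "{l \<in> (\<lambda>i. \<bar>G i\<bar>) ` {..<m}.
                 1 + real (card {i \<in> {..<m}. G i \<le> - l}) \<le> \<alpha> * real (card {i \<in> {..<m}. G i \<ge> l})}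
       = CSet H (\<lambda>i. \<bar>G i\<bar>) (Lset m G) (cfun \<alpha> m H G) (posset H G)"
proof -
  have "posset H G \<subseteq> H" by (auto simp: posset_def)
  then have hp: "H - (posset H G) = H - posset H G" by simp
  show ?thesis
    unfolding CSet_def Lset_def
  proof (intro Collect_cong conj_cong refl)
    fix l assume "l \<in> (\<lambda>i. \<bar>G i\<bar>) ` {..<m}"
    then have l: "0 < l" using nz by auto
    show "(1 + real (card {i \<in> {..<m}. G i \<le> - l}) \<le> \<alpha> * real (card {i \<in> {..<m}. G i \<ge> l}))
        = cfun \<alpha> m H G l (Vp (posset H G) (\<lambda>i. \<bar>G i\<bar>) l) (Vp (H - posset H G) (\<lambda>i. \<bar>G i\<bar>) l)"
      by (simp only: cfun_def count_split_neg[OF H nz l] count_split_pos[OF H nz l])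
  qed
qed

lemma sum_if_card: "finite A \<Longrightarrow> (\<Sum>i\<in>A. (if P i then (1::real) else 0)) = real (card {i\<in>A. P i})"
  by (simp add: sum.inter_filter[symmetric])

lemma tau_cases:
  fixes \<alpha> :: real
  assumes H: "H \<subseteq> {..<m}" and nz: "\<forall>i<m. G i \<noteq> 0"
  defines "C \<equiv> CSet H (\<lambda>i. \<bar>G i\<bar>) (Lset m G) (cfun \<alpha> m H G) (posset H G)"
  shows "sens_tau \<alpha> m G = (if C = {} then \<infinity> else ereal (Min C))"
  unfolding sens_tau_def Let_def tauset_eq[OF H nz] C_def by simp

lemma Min_C_props:
  fixes \<alpha> :: real
  assumes H: "H \<subseteq> {..<m}" and nz: "\<forall>i<m. G i \<noteq> 0"
  defines "C \<equiv> CSet H (\<lambda>i. \<bar>G i\<bar>) (Lset m G) (cfun \<alpha> m H G) (posset H G)"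
  assumes ne: "C \<noteq> {}"
  shows "Min C \<in> C" "0 < Min C"
    "1 + real (card {i \<in> {..<m}. G i \<le> - Min C}) \<le> \<alpha> * real (card {i \<in> {..<m}. G i \<ge> Min C})"
proof -
  have fin: "finite C" by (simp add: C_def CSet_def Lset_def)
  show M: "Min C \<in> C" using Min_in[OF fin ne] .
  then have "Min C \<in> Lset m G" by (simp add: C_def CSet_def)
  then show "0 < Min C" using nz by (auto simp: Lset_def)
  from M show "1 + real (card {i \<in> {..<m}. G i \<le> - Min C}) \<le> \<alpha> * real (card {i \<in> {..<m}. G i \<ge> Min C})"
    unfolding C_def tauset_eq[OF H nz, symmetric] by simp
qed

lemma PW_e:
  assumes H: "H \<subseteq> {..<m}" and nz: "\<forall>i<m. G i \<noteq> 0"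
  shows "(\<Sum>i\<in>H. sens_e \<alpha> m G i) \<le> real m * MG \<alpha> m H G"
proof -
  define C where "C = CSet H (\<lambda>i. \<bar>G i\<bar>) (Lset m G) (cfun \<alpha> m H G) (posset H G)"
  have tau: "sens_tau \<alpha> m G = (if C = {} then \<infinity> else ereal (Min C))"
    unfolding C_def by (rule tau_cases[OF H nz])
  have finH: "finite H" using H finite_subset by blast
  show ?thesis
  proof (cases "C = {}")
    case True
    then have "(\<Sum>i\<in>H. sens_e \<alpha> m G i) = 0" by (simp add: sens_e_def tau)
    moreover have "0 \<le> real m * MG \<alpha> m H G" by (simp add: Mval_nonneg)
    ultimately show ?thesis by simp
  next
    case False
    define l where "l = Min C"
    have lpos: "0 < l" using Min_C_props[OF H nz] False by (simp add: C_def l_def)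
    define N where "N = card {j\<in>{..<m}. G j \<le> - l}"
    have se: "sens_e \<alpha> m G i = real m / (1 + real N) * (if l \<le> G i then 1 else 0)" for i
      using False by (simp add: sens_e_def tau l_def[symmetric] N_def)
    have "(\<Sum>i\<in>H. sens_e \<alpha> m G i) = (\<Sum>i\<in>H. real m / (1 + real N) * (if l \<le> G i then 1 else 0))"
      by (rule sum.cong) (simp_all only: se)
    also have "\<dots> = real m / (1 + real N) * (\<Sum>i\<in>H. (if l \<le> G i then 1 else 0))"
      by (rule sum_distrib_left[symmetric])
    also have "\<dots> = real m / (1 + real N) * real (card {i\<in>H. l \<le> G i})"
      by (simp only: sum_if_card[OF finH])
    also have "card {i\<in>H. l \<le> G i} = Vp (posset H G) (\<lambda>i. \<bar>G i\<bar>) l"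
    proof -
      have "{i\<in>H. l \<le> G i} = {i\<in>posset H G. l \<le> \<bar>G i\<bar>}" using lpos by (auto simp: posset_def)
      then show ?thesis by (simp add: Vp_def)
    qed
    also have "real m / (1 + real N) * real (Vp (posset H G) (\<lambda>i. \<bar>G i\<bar>) l)
       \<le> real m / (1 + real (Vp (H - posset H G) (\<lambda>i. \<bar>G i\<bar>) l)) * real (Vp (posset H G) (\<lambda>i. \<bar>G i\<bar>) l)"
    proof (rule mult_right_mono)
      have "N = card {j\<in>{..<m} - H. G j \<le> - l} + Vp (H - posset H G) (\<lambda>i. \<bar>G i\<bar>) l"
        unfolding N_def by (rule count_split_neg[OF H nz lpos])
      then have "real (Vp (H - posset H G) (\<lambda>i. \<bar>G i\<bar>) l) \<le> real N" by simp
      then show "real m / (1 + real N) \<le> real m / (1 + real (Vp (H - posset H G) (\<lambda>i. \<bar>G i\<bar>) l))"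
        by (intro divide_left_mono) auto
    qed simp
    also have "\<dots> = real m * MG \<alpha> m H G"
      using False by (simp add: Mval_def C_def[symmetric] l_def[symmetric])
    finally show ?thesis .
  qed
qed

lemma PW_fdp:
  assumes H: "H \<subseteq> {..<m}" and nz: "\<forall>i<m. G i \<noteq> 0" and alpha: "0 \<le> \<alpha>"
  shows "FDP (sens_rej \<alpha> m G) H \<le> \<alpha> * MG \<alpha> m H G"
proof -
  define C where "C = CSet H (\<lambda>i. \<bar>G i\<bar>) (Lset m G) (cfun \<alpha> m H G) (posset H G)"
  have tau: "sens_tau \<alpha> m G = (if C = {} then \<infinity> else ereal (Min C))"
    unfolding C_def by (rule tau_cases[OF H nz])
  show ?thesis
  proof (cases "C = {}")
    case True
    then have "sens_rej \<alpha> m G = {}" by (simp add: sens_rej_def tau)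
    then have "FDP (sens_rej \<alpha> m G) H = 0" by (simp add: FDP_def)
    moreover have "0 \<le> \<alpha> * MG \<alpha> m H G" using alpha by (simp add: Mval_nonneg)
    ultimately show ?thesis by simp
  next
    case False
    define l where "l = Min C"
    have lpos: "0 < l" and key: "1 + real (card {i \<in> {..<m}. G i \<le> - l}) \<le> \<alpha> * real (card {i \<in> {..<m}. G i \<ge> l})"
      using Min_C_props[OF H nz] False by (simp_all add: C_def l_def)
    define N where "N = card {j\<in>{..<m}. G j \<le> - l}"
    define R where "R = card {i \<in> {..<m}. G i \<ge> l}"
    define V where "V = Vp (posset H G) (\<lambda>i. \<bar>G i\<bar>) l"
    define W where "W = Vp (H - posset H G) (\<lambda>i. \<bar>G i\<bar>) l"
    have rej: "sens_rej \<alpha> m G = {i \<in> {..<m}. G i \<ge> l}"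
      using False by (simp add: sens_rej_def tau l_def)
    have "sens_rej \<alpha> m G \<inter> H = {i\<in>posset H G. l \<le> \<bar>G i\<bar>}"
      using H lpos by (auto simp: rej posset_def)
    then have cardV: "card (sens_rej \<alpha> m G \<inter> H) = V" by (simp add: V_def Vp_def)
    have key': "1 + real N \<le> \<alpha> * real R" using key by (simp add: N_def R_def)
    then have Rpos: "R > 0" by (cases "R = 0") auto
    have NW: "real W \<le> real N"
      using count_split_neg[OF H nz lpos] by (simp add: N_def W_def)
    have mx: "max (card (sens_rej \<alpha> m G)) 1 = R"
      using Rpos by (simp add: rej R_def)
    have "FDP (sens_rej \<alpha> m G) H = real V / real R"
      by (simp only: FDP_def cardV mx)
    also have "\<dots> \<le> \<alpha> * real V / (1 + real N)"
    proof -
      have "real V * (1 + real N) \<le> real V * (\<alpha> * real R)"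
        using key' by (intro mult_left_mono) auto
      then show ?thesis using Rpos by (simp add: field_simps)
    qed
    also have "\<dots> \<le> \<alpha> * real V / (1 + real W)"
      using NW alpha by (intro divide_left_mono) auto
    also have "\<dots> = \<alpha> * MG \<alpha> m H G"
      using False by (simp add: Mval_def C_def[symmetric] l_def[symmetric] V_def W_def)
    finally show ?thesis .
  qed
qed

definition flipG :: "nat set \<Rightarrow> (nat \<Rightarrow> real) \<Rightarrow> nat \<Rightarrow> real" where
  "flipG S G = (\<lambda>j. if j \<in> S then - G j else G j)"

lemma flipG_invariants:
  assumes S: "S \<subseteq> H"
  shows "(\<lambda>i. \<bar>flipG S G i\<bar>) = (\<lambda>i. \<bar>G i\<bar>)" "Lset m (flipG S G) = Lset m G"
    "cfun \<alpha> m H (flipG S G) = cfun \<alpha> m H G"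
proof -
  show a: "(\<lambda>i. \<bar>flipG S G i\<bar>) = (\<lambda>i. \<bar>G i\<bar>)" by (auto simp: flipG_def)
  show "Lset m (flipG S G) = Lset m G" unfolding Lset_def using a by metis
  have "\<And>j. j \<notin> H \<Longrightarrow> flipG S G j = G j" using S by (auto simp: flipG_def)
  then have e1: "\<And>l. {j\<in>{..<m} - H. flipG S G j \<le> - l} = {j\<in>{..<m} - H. G j \<le> - l}"
    and e2: "\<And>l. {j\<in>{..<m} - H. l \<le> flipG S G j} = {j\<in>{..<m} - H. l \<le> G j}" by auto
  show "cfun \<alpha> m H (flipG S G) = cfun \<alpha> m H G"
    by (intro ext) (simp only: cfun_def e1 e2)
qed

lemma flipG_nz: "\<forall>i<m. G i \<noteq> 0 \<Longrightarrow> \<forall>i<m. flipG S G i \<noteq> 0"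
  by (simp add: flipG_def)

lemma posset_flipG:
  assumes S: "S \<subseteq> H" and H: "H \<subseteq> {..<m}" and nz: "\<forall>i<m. G i \<noteq> 0"
  shows "posset H (flipG S G) = (posset H G - S) \<union> (S - posset H G)"
  using S H nz by (auto simp: posset_def flipG_def subset_eq) (metis lessThan_iff linorder_neqE_linordered_idom)+

lemma flip_sum:
  assumes H: "H \<subseteq> {..<m}" and nz: "\<forall>i<m. G i \<noteq> 0"
  shows "(\<Sum>S\<in>Pow H. MG \<alpha> m H (flipG S G)) \<le> 2 ^ card H"
proof -
  define P where "P = posset H G"
  have PH: "P \<subseteq> H" by (auto simp: P_def posset_def)
  define g where "g T = Mval H (\<lambda>i. \<bar>G i\<bar>) (Lset m G) (cfun \<alpha> m H G) T" for T
  define \<phi> where "\<phi> S = (P - S) \<union> (S - P)" for S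
  have "(\<Sum>S\<in>Pow H. MG \<alpha> m H (flipG S G)) = (\<Sum>S\<in>Pow H. g (\<phi> S))"
  proof (rule sum.cong)
    fix S assume "S \<in> Pow H"
    then have S: "S \<subseteq> H" by simp
    show "MG \<alpha> m H (flipG S G) = g (\<phi> S)"
      unfolding g_def \<phi>_def P_def flipG_invariants[OF S] posset_flipG[OF S H nz] ..
  qed simp
  also have "\<dots> = (\<Sum>T\<in>Pow H. g T)"
  proof (rule sum.reindex_bij_witness[where i = \<phi> and j = \<phi>])
    fix S assume "S \<in> Pow H" then show "\<phi> (\<phi> S) = S" by (auto simp: \<phi>_def)
  next
    fix S assume "S \<in> Pow H" then show "\<phi> S \<in> Pow H" using PH by (auto simp: \<phi>_def)
  next
    fix S assume "S \<in> Pow H" then show "\<phi> (\<phi> S) = S" by (auto simp: \<phi>_def)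
  next
    fix S assume "S \<in> Pow H" then show "\<phi> S \<in> Pow H" using PH by (auto simp: \<phi>_def)
  qed simp
  also have "\<dots> \<le> 2 ^ card H"
    unfolding g_def
    by (rule comb_total) (use H finite_subset in \<open>auto simp: Lset_def\<close>)
  finally show ?thesis .
qed

lemma flip_bound_e:
  assumes H: "H \<subseteq> {..<m}" and nz: "\<forall>i<m. G i \<noteq> 0"
  shows "(\<Sum>S\<in>Pow H. \<Sum>i\<in>H. sens_e \<alpha> m (flipG S G) i) \<le> 2 ^ card H * real m"
proof -
  have "(\<Sum>S\<in>Pow H. \<Sum>i\<in>H. sens_e \<alpha> m (flipG S G) i) \<le> (\<Sum>S\<in>Pow H. real m * MG \<alpha> m H (flipG S G))"
    by (rule sum_mono) (rule PW_e[OF H flipG_nz[OF nz]])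
  also have "\<dots> = real m * (\<Sum>S\<in>Pow H. MG \<alpha> m H (flipG S G))" by (simp add: sum_distrib_left)
  also have "\<dots> \<le> real m * 2 ^ card H" by (rule mult_left_mono[OF flip_sum[OF H nz]]) simp
  finally show ?thesis by (simp add: mult.commute)
qed

lemma flip_bound_fdp:
  assumes H: "H \<subseteq> {..<m}" and nz: "\<forall>i<m. G i \<noteq> 0" and alpha: "0 \<le> \<alpha>"
  shows "(\<Sum>S\<in>Pow H. FDP (sens_rej \<alpha> m (flipG S G)) H) \<le> 2 ^ card H * \<alpha>"
proof -
  have "(\<Sum>S\<in>Pow H. FDP (sens_rej \<alpha> m (flipG S G)) H) \<le> (\<Sum>S\<in>Pow H. \<alpha> * MG \<alpha> m H (flipG S G))"
    by (rule sum_mono) (rule PW_fdp[OF H flipG_nz[OF nz] alpha])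
  also have "\<dots> = \<alpha> * (\<Sum>S\<in>Pow H. MG \<alpha> m H (flipG S G))" by (simp add: sum_distrib_left)
  also have "\<dots> \<le> \<alpha> * 2 ^ card H" by (rule mult_left_mono[OF flip_sum[OF H nz] alpha])
  finally show ?thesis by (simp add: mult.commute)
qed

definition Dset :: "(nat \<Rightarrow> nat) \<Rightarrow> (nat \<Rightarrow> nat set) \<Rightarrow> nat \<Rightarrow> nat set" where
  "Dset n s k = (if n k = 2 then {1} else grp2 n s k)"

definition flipx :: "(nat \<Rightarrow> nat) \<Rightarrow> nat set \<Rightarrow> (nat \<Rightarrow> nat set) \<Rightarrow> (nat \<times> nat \<Rightarrow> real) \<Rightarrow> nat \<times> nat \<Rightarrow> real" where
  "flipx n S s x = (\<lambda>(k, j). if k \<in> S \<and> j \<in> Dset n s k then - x (k, j) else x (k, j))"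

lemma smean_neg:
  assumes "\<And>j. j \<in> A \<Longrightarrow> y (i, j) = - x (i, j)"
  shows "smean y i A = - smean x i A" "svar y i A = svar x i A"
proof -
  show 1: "smean y i A = - smean x i A"
    using assms by (simp add: smean_def sum_negf)
  show "svar y i A = svar x i A"
    unfolding svar_def 1
  proof -
    have "(\<Sum>j\<in>A. (y (i, j) - - smean x i A)\<^sup>2) = (\<Sum>j\<in>A. (x (i, j) - smean x i A)\<^sup>2)"
    proof (rule sum.cong)
      fix j assume "j \<in> A"
      then have "y (i, j) - - smean x i A = - (x (i, j) - smean x i A)" using assms by simp
      then show "(y (i, j) - - smean x i A)\<^sup>2 = (x (i, j) - smean x i A)\<^sup>2" by (metis power2_minus)
    qed simp
    then show "(\<Sum>j\<in>A. (y (i, j) - - smean x i A)\<^sup>2) / (real (card A) - 1) =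
               (\<Sum>j\<in>A. (x (i, j) - smean x i A)\<^sup>2) / (real (card A) - 1)" by simp
  qed
qed

lemma smean_same:
  assumes "\<And>j. j \<in> A \<Longrightarrow> y (i, j) = x (i, j)"
  shows "smean y i A = smean x i A" "svar y i A = svar x i A"
  using assms by (simp_all add: smean_def svar_def)

lemma row_local:
  assumes "\<And>j. x (k, j) = y (k, j)"
  shows "Tstat n x s k = Tstat n y s k" "T0stat n x s k = T0stat n y s k"
proof -
  have a: "smean x k A = smean y k A" "svar x k A = svar y k A" for A
    using smean_same[of A y k x] assms by auto
  have "\<And>j. x (k, j) = y (k, j)" by (rule assms)
  then have b: "x (k, 0) = y (k, 0)" "x (k, 1) = y (k, 1)" by auto
  show "Tstat n x s k = Tstat n y s k" "T0stat n x s k = T0stat n y s k"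
    by (simp_all only: Tstat_def T0stat_def Vstat_def V0stat_def Sstat_def a b)
qed

lemma swap_T_at:
  assumes n2: "n i \<ge> 2"
  shows "Tstat n (flipx n {i} s x) s i = T0stat n x s i"
        "T0stat n (flipx n {i} s x) s i = Tstat n x s i"
proof -
  let ?y = "flipx n {i} s x"
  have "Tstat n ?y s i = T0stat n x s i \<and> T0stat n ?y s i = Tstat n x s i"
  proof (cases "n i = 2")
    case True
    have y0: "?y (i, 0) = x (i, 0)" and y1: "?y (i, 1) = - x (i, 1)"
      by (simp_all add: flipx_def Dset_def True)
    have "Tstat n ?y s i = (?y (i, 0) + ?y (i, 1)) / sqrt 2" "T0stat n ?y s i = (?y (i, 0) - ?y (i, 1)) / sqrt 2"
      "Tstat n x s i = (x (i, 0) + x (i, 1)) / sqrt 2" "T0stat n x s i = (x (i, 0) - x (i, 1)) / sqrt 2"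
      by (simp_all only: Tstat_def T0stat_def True if_True refl)
    then show ?thesis by (simp only: y0 y1 diff_conv_add_uminus minus_minus)
  next
    case False
    have g: "\<And>j. j \<in> grp2 n s i \<Longrightarrow> ?y (i, j) = - x (i, j)"
      using False by (simp add: flipx_def Dset_def)
    have g1: "\<And>j. j \<in> s i \<Longrightarrow> ?y (i, j) = x (i, j)"
      using False by (simp add: flipx_def Dset_def grp2_def)
    note e = smean_neg[of "grp2 n s i" ?y i x, OF g] smean_same[of "s i" ?y i x, OF g1]
    have V: "Vstat n ?y s i = V0stat n x s i" "V0stat n ?y s i = Vstat n x s i"
      by (simp_all add: Vstat_def V0stat_def e)
    have S: "Sstat n ?y s i = Sstat n x s i"
      by (simp add: Sstat_def e Let_def)
    show ?thesis using False by (simp only: Tstat_def T0stat_def V S if_False simp_thms)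
  qed
  then show "Tstat n ?y s i = T0stat n x s i" "T0stat n ?y s i = Tstat n x s i" by simp_all
qed

lemma swap_T:
  assumes n2: "n i \<ge> 2"
  shows "Tstat n (flipx n {i} s x) s = (Tstat n x s)(i := T0stat n x s i)"
        "T0stat n (flipx n {i} s x) s = (T0stat n x s)(i := Tstat n x s i)"
proof -
  have o: "Tstat n (flipx n {i} s x) s k = Tstat n x s k \<and> T0stat n (flipx n {i} s x) s k = T0stat n x s k"
    if "k \<noteq> i" for k
  proof -
    have "\<And>j. flipx n {i} s x (k, j) = x (k, j)" using that by (simp add: flipx_def)
    then have "\<And>j. x (k, j) = flipx n {i} s x (k, j)" by simp
    from row_local[of x k "flipx n {i} s x", OF this] show ?thesis by simp
  qed
  show "Tstat n (flipx n {i} s x) s = (Tstat n x s)(i := T0stat n x s i)"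
    by (rule ext) (simp add: o swap_T_at[of n i s x, OF n2])
  show "T0stat n (flipx n {i} s x) s = (T0stat n x s)(i := Tstat n x s i)"
    by (rule ext) (simp add: o swap_T_at[of n i s x, OF n2])
qed

lemma perm_ti: "(i::nat) < m \<Longrightarrow> Transposition.transpose i (m + i) permutes {..<2*m}"
  by (rule permutes_swap_id) auto

lemma pooled_swap:
  assumes "i < m"
  shows "pooled m (a(i := b i)) (b(i := a i)) = pooled m a b \<circ> Transposition.transpose i (m + i)"
proof (rule ext)
  fix k
  show "pooled m (a(i := b i)) (b(i := a i)) k = (pooled m a b \<circ> Transposition.transpose i (m + i)) k"
  proof (cases "k < 2 * m")
    case True
    then show ?thesis using assms
      by (cases "k = i"; cases "k = m + i") (auto simp: pooled_def transpose_def)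
  next
    case False
    then have "k \<noteq> i" "k \<noteq> m + i" using assms by auto
    then show ?thesis using False by (simp add: pooled_def transpose_def)
  qed
qed

lemma fmix_swap:
  assumes i: "i < m" and hp: "\<forall>w \<pi>. \<pi> permutes {..<2*m} \<longrightarrow> hsel (w \<circ> \<pi>) = hsel w"
  shows "fmix_hat K hsel m (T(i := T0 i)) (T0(i := T i)) = fmix_hat K hsel m T T0"
proof (rule ext)
  fix t
  have h: "hsel (pooled m (T(i := T0 i)) (T0(i := T i))) = hsel (pooled m T T0)"
    unfolding pooled_swap[OF i] using hp perm_ti[OF i] by blast
  have s: "(\<Sum>k<m. Kh K h (t - (T(i := T0 i)) k) + Kh K h (t - (T0(i := T i)) k))
         = (\<Sum>k<m. Kh K h (t - T k) + Kh K h (t - T0 k))" for h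
    by (rule sum.cong) auto
  show "fmix_hat K hsel m (T(i := T0 i)) (T0(i := T i)) t = fmix_hat K hsel m T T0 t"
    unfolding fmix_hat_def Let_def h s ..
qed

definition KNR :: "(real \<Rightarrow> real) \<Rightarrow> ((nat \<Rightarrow> real) \<Rightarrow> real) \<Rightarrow> nat \<Rightarrow> (nat \<Rightarrow> real) \<Rightarrow> real \<Rightarrow> real" where
  "KNR K h0sel m R t = (let h0 = h0sel (pooled m R (\<lambda>i. - R i)) in
      ((\<Sum>i<m. Kh K h0 (t - R i)) + (\<Sum>i<m. Kh K h0 (t + R i))) / (2 * real m))"

lemma f0_KN_alt: "f0_KN K h0sel m T T0 = KNR K h0sel m (Ttil T T0)"
  by (rule ext) (simp add: f0_KN_def KNR_def Let_def)

lemma KNR_neg: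
  assumes i: "i < m" and hp: "\<forall>w \<pi>. \<pi> permutes {..<2*m} \<longrightarrow> h0sel (w \<circ> \<pi>) = h0sel w"
  shows "KNR K h0sel m (R(i := - R i)) = KNR K h0sel m R"
proof (rule ext)
  fix t
  have pe: "pooled m (R(i := - R i)) (\<lambda>k. - (R(i := - R i)) k) = pooled m R (\<lambda>k. - R k) \<circ> Transposition.transpose i (m + i)"
  proof -
    have "(\<lambda>k. - (R(i := - R i)) k) = (\<lambda>k. - R k)(i := R i)" by auto
    moreover have "R(i := - R i) = R(i := (\<lambda>k. - R k) i)" by simp
    ultimately show ?thesis using pooled_swap[OF i, of R "\<lambda>k. - R k"] by simp
  qed
  have h: "h0sel (pooled m (R(i := - R i)) (\<lambda>k. - (R(i := - R i)) k)) = h0sel (pooled m R (\<lambda>k. - R k))"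
    unfolding pe using hp perm_ti[OF i] by blast
  have s: "(\<Sum>k<m. Kh K h (t - (R(i := - R i)) k)) + (\<Sum>k<m. Kh K h (t + (R(i := - R i)) k))
         = (\<Sum>k<m. Kh K h (t - R k)) + (\<Sum>k<m. Kh K h (t + R k))" for h
  proof -
    have "(\<Sum>k<m. Kh K h (t - (R(i := - R i)) k)) + (\<Sum>k<m. Kh K h (t + (R(i := - R i)) k))
        = (\<Sum>k<m. Kh K h (t - (R(i := - R i)) k) + Kh K h (t + (R(i := - R i)) k))"
      by (simp add: sum.distrib)
    also have "\<dots> = (\<Sum>k<m. Kh K h (t - R k) + Kh K h (t + R k))"
      by (rule sum.cong) auto
    also have "\<dots> = (\<Sum>k<m. Kh K h (t - R k)) + (\<Sum>k<m. Kh K h (t + R k))"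
      by (simp add: sum.distrib)
    finally show ?thesis .
  qed
  show "KNR K h0sel m (R(i := - R i)) t = KNR K h0sel m R t"
    unfolding KNR_def Let_def h s ..
qed

lemma Ttil_swap_cases:
  "Ttil (T(i := T0 i)) (T0(i := T i)) = Ttil T T0 \<or>
   Ttil (T(i := T0 i)) (T0(i := T i)) = (Ttil T T0)(i := - Ttil T T0 i)"
proof -
  have "Ttil (T(i := T0 i)) (T0(i := T i)) i = Ttil T T0 i \<or>
        Ttil (T(i := T0 i)) (T0(i := T i)) i = - Ttil T T0 i"
    by (auto simp: Ttil_def abs_if split: if_splits)
  moreover have "\<And>k. k \<noteq> i \<Longrightarrow> Ttil (T(i := T0 i)) (T0(i := T i)) k = Ttil T T0 k"
    by (simp add: Ttil_def)
  ultimately show ?thesis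
  proof (elim disjE)
    assume a: "Ttil (T(i := T0 i)) (T0(i := T i)) i = Ttil T T0 i"
      and o: "\<And>k. k \<noteq> i \<Longrightarrow> Ttil (T(i := T0 i)) (T0(i := T i)) k = Ttil T T0 k"
    have "Ttil (T(i := T0 i)) (T0(i := T i)) = Ttil T T0"
    proof (rule ext)
      fix k show "Ttil (T(i := T0 i)) (T0(i := T i)) k = Ttil T T0 k"
        using a o by (cases "k = i") auto
    qed
    then show ?thesis by blast
  next
    assume a: "Ttil (T(i := T0 i)) (T0(i := T i)) i = - Ttil T T0 i"
      and o: "\<And>k. k \<noteq> i \<Longrightarrow> Ttil (T(i := T0 i)) (T0(i := T i)) k = Ttil T T0 k"
    have "Ttil (T(i := T0 i)) (T0(i := T i)) = (Ttil T T0)(i := - Ttil T T0 i)"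
    proof (rule ext)
      fix k show "Ttil (T(i := T0 i)) (T0(i := T i)) k = ((Ttil T T0)(i := - Ttil T T0 i)) k"
        using a o by (cases "k = i") auto
    qed
    then show ?thesis by blast
  qed
qed

lemma f0KN_swap:
  assumes i: "i < m" and hp: "\<forall>w \<pi>. \<pi> permutes {..<2*m} \<longrightarrow> h0sel (w \<circ> \<pi>) = h0sel w"
  shows "f0_KN K h0sel m (T(i := T0 i)) (T0(i := T i)) = f0_KN K h0sel m T T0"
proof -
  from Ttil_swap_cases[of T i T0] show ?thesis
  proof
    assume "Ttil (T(i := T0 i)) (T0(i := T i)) = Ttil T T0"
    then show ?thesis by (simp only: f0_KN_alt)
  next
    assume "Ttil (T(i := T0 i)) (T0(i := T i)) = (Ttil T T0)(i := - Ttil T T0 i)"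
    then show ?thesis by (simp only: f0_KN_alt KNR_neg[OF i hp])
  qed
qed

lemma emp_cf_perm:
  assumes "\<pi> permutes {..<N}"
  shows "emp_cf N (w \<circ> \<pi>) = emp_cf N w"
proof (rule ext)
  fix s
  have "(\<Sum>k<N. exp (\<i> * complex_of_real (s * w k))) = (\<Sum>k<N. exp (\<i> * complex_of_real (s * (w \<circ> \<pi>) k)))"
    using sum.permute[OF assms, of "\<lambda>k. exp (\<i> * complex_of_real (s * w k))"] by (simp add: comp_def)
  then show "emp_cf N (w \<circ> \<pi>) s = emp_cf N w s" by (simp add: emp_cf_def)
qed

definition JCF :: "real \<Rightarrow> nat \<Rightarrow> (real \<Rightarrow> complex) \<Rightarrow> real \<Rightarrow> real" where
  "JCF \<gamma> m \<phi> t =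
     (let N = 2 * m;
          sh = Inf {s \<in> {0..ln (real N)}. cmod (\<phi> s) = real N powr (- \<gamma>)};
          \<phi>1 = \<phi> sh; \<phi>d = vector_derivative \<phi> (at sh);
          sig2 = - deriv (\<lambda>s. cmod (\<phi> s)) sh / (sh * cmod \<phi>1);
          mu = (Re \<phi>1 * Im \<phi>d - Re \<phi>d * Im \<phi>1) / (cmod \<phi>1)\<^sup>2
      in normal_density mu (sqrt sig2) t)"

lemma f0_JC_alt: "f0_JC \<gamma> m T T0 = JCF \<gamma> m (emp_cf (2 * m) (pooled m T T0))"
  by (rule ext) (simp only: f0_JC_def JCF_def Let_def)

lemma f0JC_swap:
  assumes i: "i < m"
  shows "f0_JC \<gamma> m (T(i := T0 i)) (T0(i := T i)) = f0_JC \<gamma> m T T0"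
proof -
  have "emp_cf (2 * m) (pooled m (T(i := T0 i)) (T0(i := T i))) = emp_cf (2 * m) (pooled m T T0)"
    unfolding pooled_swap[OF i] by (rule emp_cf_perm[OF perm_ti[OF i]])
  then show ?thesis by (simp only: f0_JC_alt)
qed

lemma f0hat_swap:
  assumes i: "i < m" and hp: "\<forall>w \<pi>. \<pi> permutes {..<2*m} \<longrightarrow> h0sel (w \<circ> \<pi>) = h0sel w"
  shows "f0_hat opt K h0sel \<gamma> m (T(i := T0 i)) (T0(i := T i)) = f0_hat opt K h0sel \<gamma> m T T0"
  by (cases opt) (simp_all add: f0_hat_def f0KN_swap[OF i hp] f0JC_swap[OF i])

lemma sgn_max_swap:
  fixes a b :: real
  shows "sgn (a - b) * max (exp (- b)) (exp (- a)) = - (sgn (b - a) * max (exp (- a)) (exp (- b)))"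
proof -
  have "sgn (a - b) = - sgn (b - a)" by (simp add: sgn_if)
  moreover have "max (exp (- b)) (exp (- a)) = max (exp (- a)) (exp (- b))" by (rule max.commute)
  ultimately show ?thesis by simp
qed

lemma SENS_G_swap:
  assumes i: "i < m" and n2: "n i \<ge> 2"
    and hp: "\<forall>w \<pi>. \<pi> permutes {..<2*m} \<longrightarrow> hsel (w \<circ> \<pi>) = hsel w"
    and h0p: "\<forall>w \<pi>. \<pi> permutes {..<2*m} \<longrightarrow> h0sel (w \<circ> \<pi>) = h0sel w"
  shows "SENS_G opt K hsel h0sel \<gamma> n m (flipx n {i} s x, s)
       = flipG {i} (SENS_G opt K hsel h0sel \<gamma> n m (x, s))"
proof -
  let ?TA = "Tstat n x s" and ?TZ = "T0stat n x s"
  note sw = swap_T[of n i s x, OF n2]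
  define gg where "gg = SENS_g opt K hsel h0sel \<gamma> n m (x, s)"
  have g: "SENS_g opt K hsel h0sel \<gamma> n m (flipx n {i} s x, s) = gg"
  proof (rule ext)
    fix t
    have "SENS_g opt K hsel h0sel \<gamma> n m (flipx n {i} s x, s) t
        = f0_hat opt K h0sel \<gamma> m (?TA(i := ?TZ i)) (?TZ(i := ?TA i)) t / fmix_hat K hsel m (?TA(i := ?TZ i)) (?TZ(i := ?TA i)) t"
      by (simp only: SENS_g_def Let_def fst_conv snd_conv sw)
    also have "\<dots> = f0_hat opt K h0sel \<gamma> m ?TA ?TZ t / fmix_hat K hsel m ?TA ?TZ t"
      by (simp only: f0hat_swap[OF i h0p] fmix_swap[OF i hp])
    also have "\<dots> = gg t"
      by (simp only: gg_def SENS_g_def Let_def fst_conv snd_conv)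
    finally show "SENS_g opt K hsel h0sel \<gamma> n m (flipx n {i} s x, s) t = gg t" .
  qed
  have U: "SENS_U opt K hsel h0sel \<gamma> n m (flipx n {i} s x, s) k = gg ((?TA(i := ?TZ i)) k)"
    "SENS_U0 opt K hsel h0sel \<gamma> n m (flipx n {i} s x, s) k = gg ((?TZ(i := ?TA i)) k)"
    "SENS_U opt K hsel h0sel \<gamma> n m (x, s) k = gg (?TA k)"
    "SENS_U0 opt K hsel h0sel \<gamma> n m (x, s) k = gg (?TZ k)" for k
    by (simp_all only: SENS_U_def SENS_U0_def g gg_def fst_conv snd_conv sw)
  show ?thesis
  proof (rule ext)
    fix k
    show "SENS_G opt K hsel h0sel \<gamma> n m (flipx n {i} s x, s) k = flipG {i} (SENS_G opt K hsel h0sel \<gamma> n m (x, s)) k"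
    proof (cases "k = i")
      case True
      have "SENS_G opt K hsel h0sel \<gamma> n m (flipx n {i} s x, s) k
          = sgn (gg (?TA i) - gg (?TZ i)) * max (exp (- gg (?TZ i))) (exp (- gg (?TA i)))"
        by (simp only: SENS_G_def Let_def U True fun_upd_same)
      also have "\<dots> = - (sgn (gg (?TZ i) - gg (?TA i)) * max (exp (- gg (?TA i))) (exp (- gg (?TZ i))))"
        by (rule sgn_max_swap)
      also have "\<dots> = flipG {i} (SENS_G opt K hsel h0sel \<gamma> n m (x, s)) k"
        by (simp only: SENS_G_def Let_def U True flipG_def singleton_iff if_True simp_thms)
      finally show ?thesis .
    next
      case False
      then show ?thesis
        by (simp add: SENS_G_def Let_def U flipG_def)
    qed
  qed
qed

abbreviation OM :: "nat \<Rightarrow> (nat \<Rightarrow> nat) \<Rightarrow> (nat \<times> nat \<Rightarrow> real) measure" where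
  "OM m n \<equiv> PiM (obs_idx m n) (\<lambda>_. borel)"

lemma Dset_sub: "Dset n s k \<subseteq> {..<n k}"
  by (auto simp: Dset_def grp2_def)

lemma flipx_meas:
  assumes S: "S \<subseteq> {..<m}"
  shows "flipx n S s \<in> measurable (OM m n) (OM m n)"
proof -
  define fl where "fl ij \<omega> = (if fst ij \<in> S \<and> snd ij \<in> Dset n s (fst ij) then - \<omega> ij else (\<omega> ij :: real))"
    for ij :: "nat \<times> nat" and \<omega>
  have eq: "flipx n S s = (\<lambda>\<omega> ij. fl ij \<omega>)"
    by (auto simp: flipx_def fl_def fun_eq_iff)
  show ?thesis unfolding eq
  proof (rule measurable_PiM_single')
    fix ij assume ij: "ij \<in> obs_idx m n"
    show "fl ij \<in> borel_measurable (OM m n)"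
    proof (cases "fst ij \<in> S \<and> snd ij \<in> Dset n s (fst ij)")
      case True
      then have "fl ij = (\<lambda>\<omega>. - \<omega> ij)" by (simp add: fl_def fun_eq_iff)
      then show ?thesis using ij by simp
    next
      case False
      then have "fl ij = (\<lambda>\<omega>. \<omega> ij)" unfolding fl_def by (intro ext) (simp only: if_False)
      then show ?thesis using ij by simp
    qed
  next
    show "(\<lambda>\<omega> ij. fl ij \<omega>) \<in> space (OM m n) \<rightarrow> (\<Pi>\<^sub>E ij\<in>obs_idx m n. space borel)"
    proof
      fix \<omega> assume "\<omega> \<in> space (OM m n)"
      then have w: "\<omega> \<in> extensional (obs_idx m n)" by (simp add: space_PiM PiE_def)
      have "fl ij \<omega> = undefined" if "ij \<notin> obs_idx m n" for ij
      proof -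
        have "\<not> (fst ij \<in> S \<and> snd ij \<in> Dset n s (fst ij))"
          using that S Dset_sub[of n s "fst ij"] by (cases ij) (auto simp: obs_idx_def)
        moreover have "\<omega> ij = undefined" using w that by (rule extensional_arb)
        ultimately show ?thesis unfolding fl_def by (metis (no_types) if_not_P)
      qed
      then show "(\<lambda>ij. fl ij \<omega>) \<in> (\<Pi>\<^sub>E ij\<in>obs_idx m n. space borel)" by (auto simp: PiE_def extensional_def)
    qed
  qed
qed

lemma fz_meas:
  fixes D I :: "'i set"
  assumes D: "D \<subseteq> I" and sp: "space \<mu> = (UNIV :: real set)" and sets: "sets \<mu> = sets borel"
  shows "(\<lambda>z j. if j \<in> D then - z j else (z j :: real)) \<in> measurable (PiM I (\<lambda>_. \<mu>)) (PiM I (\<lambda>_. \<mu>))"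
proof (rule measurable_PiM_single')
  fix j assume j: "j \<in> I"
  have m1: "(\<lambda>z. z j) \<in> measurable (PiM I (\<lambda>_. \<mu>)) \<mu>" using j by simp
  show "(\<lambda>z. if j \<in> D then - z j else z j) \<in> measurable (PiM I (\<lambda>_. \<mu>)) \<mu>"
  proof (cases "j \<in> D")
    case True
    have "uminus \<in> measurable \<mu> \<mu>" using sets by (simp add: measurable_cong_sets[OF sets sets])
    from measurable_compose[OF m1 this] have "(\<lambda>z. - z j) \<in> measurable (PiM I (\<lambda>_. \<mu>)) \<mu>" .
    then show ?thesis using True by simp
  next
    case False
    then show ?thesis using m1 by simp
  qed
next
  show "(\<lambda>z j. if j \<in> D then - z j else z j) \<in> space (PiM I (\<lambda>_. \<mu>)) \<rightarrow> (\<Pi>\<^sub>E j\<in>I. space \<mu>)"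
    using D by (auto simp: space_PiM sp PiE_def extensional_def)
qed

lemma PiM_flip:
  fixes \<mu> :: "real measure" and I :: "'i set"
  assumes prob: "prob_space \<mu>" and sets: "sets \<mu> = sets borel"
    and sym: "\<And>A. A \<in> sets borel \<Longrightarrow> emeasure \<mu> (uminus -` A) = emeasure \<mu> A"
    and I: "finite I" and D: "D \<subseteq> I"
  shows "distr (PiM I (\<lambda>_. \<mu>)) (PiM I (\<lambda>_. \<mu>)) (\<lambda>z j. if j \<in> D then - z j else (z j :: real)) = PiM I (\<lambda>_. \<mu>)"
proof -
  define fz where "fz = (\<lambda>z j. if j \<in> D then - z j else (z j :: real))"
  have sp: "space \<mu> = UNIV" using sets_eq_imp_space_eq[OF sets] by simp
  have fzm: "fz \<in> measurable (PiM I (\<lambda>_. \<mu>)) (PiM I (\<lambda>_. \<mu>))"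
    unfolding fz_def by (rule fz_meas[OF D sp sets])
  have "sigma_finite_measure \<mu>" using prob by (rule prob_space_imp_sigma_finite)
  then interpret product_sigma_finite "\<lambda>_. \<mu>" by (simp add: product_sigma_finite_def)
  have um: "uminus -` B \<in> sets \<mu>" if "B \<in> sets \<mu>" for B
  proof -
    have "uminus \<in> measurable \<mu> \<mu>" by (simp add: measurable_cong_sets[OF sets sets])
    from measurable_sets[OF this that] show ?thesis by (simp add: sp)
  qed
  have "distr (PiM I (\<lambda>_. \<mu>)) (PiM I (\<lambda>_. \<mu>)) fz = PiM I (\<lambda>_. \<mu>)"
  proof (rule PiM_eqI[OF I])
    show "sets (distr (PiM I (\<lambda>_. \<mu>)) (PiM I (\<lambda>_. \<mu>)) fz) = sets (PiM I (\<lambda>_. \<mu>))" by simp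
  next
    fix A assume A: "\<And>i. i \<in> I \<Longrightarrow> A i \<in> sets \<mu>"
    have PA: "Pi\<^sub>E I A \<in> sets (PiM I (\<lambda>_. \<mu>))" using A I by (intro sets_PiM_I_finite) auto
    define B where "B j = (if j \<in> D then uminus -` A j else A j)" for j
    have B: "B j \<in> sets \<mu>" if "j \<in> I" for j using A[OF that] um by (simp add: B_def)
    have pre: "fz -` Pi\<^sub>E I A \<inter> space (PiM I (\<lambda>_. \<mu>)) = Pi\<^sub>E I B"
    proof (intro set_eqI iffI)
      fix z assume z: "z \<in> fz -` Pi\<^sub>E I A \<inter> space (PiM I (\<lambda>_. \<mu>))"
      then have ze: "z \<in> extensional I" by (simp add: space_PiM PiE_def)
      from z have "fz z \<in> Pi\<^sub>E I A" by simp
      then have "\<forall>j\<in>I. z j \<in> B j" by (auto simp: fz_def B_def PiE_def Pi_def split: if_splits)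
      then show "z \<in> Pi\<^sub>E I B" using ze by (auto simp: PiE_def)
    next
      fix z assume z: "z \<in> Pi\<^sub>E I B"
      then have "z \<in> space (PiM I (\<lambda>_. \<mu>))" by (auto simp: space_PiM sp PiE_def)
      moreover have "fz z \<in> Pi\<^sub>E I A"
      proof -
        have "\<forall>j\<in>I. fz z j \<in> A j" using z by (auto simp: fz_def B_def PiE_def Pi_def)
        moreover have "fz z \<in> extensional I" using z D by (auto simp: fz_def PiE_def extensional_def)
        ultimately show ?thesis by (auto simp: PiE_def)
      qed
      ultimately show "z \<in> fz -` Pi\<^sub>E I A \<inter> space (PiM I (\<lambda>_. \<mu>))" by simp
    qed
    have "emeasure (distr (PiM I (\<lambda>_. \<mu>)) (PiM I (\<lambda>_. \<mu>)) fz) (Pi\<^sub>E I A)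
        = emeasure (PiM I (\<lambda>_. \<mu>)) (Pi\<^sub>E I B)"
      by (simp add: emeasure_distr[OF fzm PA] pre)
    also have "\<dots> = (\<Prod>j\<in>I. emeasure \<mu> (B j))" by (rule emeasure_PiM[OF I B])
    also have "\<dots> = (\<Prod>j\<in>I. emeasure \<mu> (A j))"
    proof (rule prod.cong)
      fix j assume j: "j \<in> I"
      show "emeasure \<mu> (B j) = emeasure \<mu> (A j)"
        using sym[of "A j"] A[OF j] sets by (simp add: B_def)
    qed simp
    finally show "emeasure (distr (PiM I (\<lambda>_. \<mu>)) (PiM I (\<lambda>_. \<mu>)) fz) (Pi\<^sub>E I A) = (\<Prod>j\<in>I. emeasure \<mu> (A j))" .
  qed
  then show ?thesis by (simp add: fz_def)
qed

lemma dens_props: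
  fixes g :: "real \<Rightarrow> real"
  assumes gm: "g \<in> borel_measurable borel"
    and nn: "\<And>t. 0 \<le> g t" and sy: "\<And>t. g (- t) = g t"
    and one: "(\<integral>\<^sup>+t. ennreal (g t) \<partial>lborel) = 1"
  shows "prob_space (density lborel (\<lambda>t. ennreal (g t)))"
    "sets (density lborel (\<lambda>t. ennreal (g t))) = sets borel"
    "\<And>A. A \<in> sets borel \<Longrightarrow> emeasure (density lborel (\<lambda>t. ennreal (g t))) (uminus -` A)
        = emeasure (density lborel (\<lambda>t. ennreal (g t))) A"
proof -
  have gm': "(\<lambda>t. ennreal (g t)) \<in> borel_measurable lborel" using gm by simp
  show "prob_space (density lborel (\<lambda>t. ennreal (g t)))"
  proof (rule prob_spaceI)
    show "emeasure (density lborel (\<lambda>t. ennreal (g t))) (space (density lborel (\<lambda>t. ennreal (g t)))) = 1"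
      using one by (simp add: emeasure_density[OF gm'])
  qed
  show "sets (density lborel (\<lambda>t. ennreal (g t))) = sets borel" by simp
  fix A :: "real set" assume A: "A \<in> sets borel"
  have um: "uminus -` A \<in> sets lborel"
    using measurable_sets[OF borel_measurable_uminus[OF measurable_ident_sets[OF refl]] A] by simp
  have "emeasure (density lborel (\<lambda>t. ennreal (g t))) (uminus -` A)
      = (\<integral>\<^sup>+ x. ennreal (g x) * indicator (uminus -` A) x \<partial>lborel)"
    by (rule emeasure_density[OF gm' um])
  also have "\<dots> = (\<integral>\<^sup>+ x. (\<lambda>y. ennreal (g y) * indicator A y) (- x) \<partial>lborel)"
    by (intro nn_integral_cong) (simp add: sy indicator_def)
  also have "\<dots> = (\<integral>\<^sup>+ y. ennreal (g y) * indicator A y \<partial>(distr lborel borel uminus))"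
    using A gm by (subst nn_integral_distr) auto
  also have "\<dots> = (\<integral>\<^sup>+ y. ennreal (g y) * indicator A y \<partial>lborel)"
    by (simp add: lborel_distr_uminus)
  also have "\<dots> = emeasure (density lborel (\<lambda>t. ennreal (g t))) A"
    using A by (simp add: emeasure_density[OF gm'])
  finally show "emeasure (density lborel (\<lambda>t. ennreal (g t))) (uminus -` A)
        = emeasure (density lborel (\<lambda>t. ennreal (g t))) A" .
qed

abbreviation YM :: "nat \<Rightarrow> (nat \<Rightarrow> nat) \<Rightarrow> nat \<Rightarrow> (nat \<times> nat \<Rightarrow> real) measure" where
  "YM m n i \<equiv> PiM (other_idx m n i) (\<lambda>_. borel)"

abbreviation ZM :: "(nat \<Rightarrow> nat) \<Rightarrow> nat \<Rightarrow> (nat \<Rightarrow> real) measure" where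
  "ZM n i \<equiv> PiM {..<n i} (\<lambda>_. borel)"

lemma other_sub: "other_idx m n i \<subseteq> obs_idx m n"
  by (auto simp: other_idx_def obs_idx_def)

lemma combine_meas:
  assumes i: "i < m"
  shows "(\<lambda>(y, z). combine n i y z) \<in> measurable (YM m n i \<Otimes>\<^sub>M ZM n i) (OM m n)"
proof -
  define fl where "fl ij \<omega> = (if fst ij = i \<and> snd ij < n i then snd \<omega> (snd ij) else (fst \<omega> ij :: real))"
    for ij :: "nat \<times> nat" and \<omega> :: "(nat \<times> nat \<Rightarrow> real) \<times> (nat \<Rightarrow> real)"
  have eq: "(\<lambda>(y, z). combine n i y z) = (\<lambda>\<omega> ij. fl ij \<omega>)"
    by (auto simp: combine_def fl_def fun_eq_iff)
  show ?thesis unfolding eq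
  proof (rule measurable_PiM_single')
    fix ij assume ij: "ij \<in> obs_idx m n"
    show "fl ij \<in> borel_measurable (YM m n i \<Otimes>\<^sub>M ZM n i)"
    proof (cases "fst ij = i \<and> snd ij < n i")
      case True
      then have e: "fl ij = (\<lambda>\<omega>. snd \<omega> (snd ij))" by (simp add: fl_def fun_eq_iff)
      have "(\<lambda>z. z (snd ij)) \<in> borel_measurable (ZM n i)" using True by simp
      from measurable_compose[OF measurable_snd this] show ?thesis unfolding e .
    next
      case False
      then have e: "fl ij = (\<lambda>\<omega>. fst \<omega> ij)" unfolding fl_def by (intro ext) (simp only: if_False)
      have "ij \<in> other_idx m n i" using ij False by (cases ij) (auto simp: obs_idx_def other_idx_def)
      then have "(\<lambda>y. y ij) \<in> borel_measurable (YM m n i)" by simp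
      from measurable_compose[OF measurable_fst this] show ?thesis unfolding e .
    qed
  next
    show "(\<lambda>\<omega> ij. fl ij \<omega>) \<in> space (YM m n i \<Otimes>\<^sub>M ZM n i) \<rightarrow> (\<Pi>\<^sub>E ij\<in>obs_idx m n. space borel)"
    proof
      fix \<omega> assume "\<omega> \<in> space (YM m n i \<Otimes>\<^sub>M ZM n i)"
      then have w: "fst \<omega> \<in> extensional (other_idx m n i)"
        by (auto simp: space_pair_measure space_PiM PiE_def)
      have "fl ij \<omega> = undefined" if "ij \<notin> obs_idx m n" for ij
      proof -
        have c: "\<not> (fst ij = i \<and> snd ij < n i)" using that i by (cases ij) (auto simp: obs_idx_def)
        have "ij \<notin> other_idx m n i" using that other_sub by blast
        then have "fst \<omega> ij = undefined" using w by (rule extensional_arb[rotated])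
        then show ?thesis unfolding fl_def using c by (metis (no_types) if_not_P)
      qed
      then show "(\<lambda>ij. fl ij \<omega>) \<in> (\<Pi>\<^sub>E ij\<in>obs_idx m n. space borel)" by (auto simp: PiE_def extensional_def)
    qed
  qed
qed

lemma kernel_meas:
  fixes f :: "(nat \<times> nat \<Rightarrow> real) \<Rightarrow> real \<Rightarrow> real"
  assumes i: "i < m"
    and fm: "(\<lambda>(y, t). f y t) \<in> borel_measurable (YM m n i \<Otimes>\<^sub>M borel)"
    and fy: "\<forall>y \<in> space (YM m n i). (\<forall>t. 0 \<le> f y t \<and> f y (- t) = f y t) \<and> (\<integral>\<^sup>+t. ennreal (f y t) \<partial>lborel) = 1"
  shows "(\<lambda>y. distr (PiM {..<n i} (\<lambda>_. density lborel (\<lambda>t. ennreal (f y t)))) (OM m n) (combine n i y))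
           \<in> measurable (YM m n i) (subprob_algebra (OM m n))"
proof (rule measurable_distr2[OF combine_meas[OF i]])
  let ?g = "\<lambda>y. PiM {..<n i} (\<lambda>_. density lborel (\<lambda>t. ennreal (f y t)))"
  have fyt: "(\<lambda>t. f y t) \<in> borel_measurable borel" if "y \<in> space (YM m n i)" for y
    using measurable_Pair2[OF fm that] by simp
  have dp: "prob_space (density lborel (\<lambda>t. ennreal (f y t)))"
    "sets (density lborel (\<lambda>t. ennreal (f y t))) = sets borel"
    if "y \<in> space (YM m n i)" for y
    using dens_props[OF fyt[OF that]] fy that by auto
  have setsg: "sets (?g y) = sets (ZM n i)" for y
    by (rule sets_PiM_cong) simp_all
  show "?g \<in> measurable (YM m n i) (subprob_algebra (ZM n i))"
  proof (rule measurable_subprob_algebra_generated[where \<Omega> = "space (ZM n i)" and G = "prod_algebra {..<n i} (\<lambda>_. (borel :: real measure))"])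
    show "sets (ZM n i) = sigma_sets (space (ZM n i)) (prod_algebra {..<n i} (\<lambda>_. (borel :: real measure)))"
      by (simp add: sets_PiM space_PiM)
    show "Int_stable (prod_algebra {..<n i} (\<lambda>_. (borel :: real measure)))" by (rule Int_stable_prod_algebra)
    show "prod_algebra {..<n i} (\<lambda>_. (borel :: real measure)) \<subseteq> Pow (space (ZM n i))"
      using prod_algebra_sets_into_space[of "{..<n i}" "\<lambda>_. (borel :: real measure)"] by (simp add: space_PiM)
  next
    fix y assume y: "y \<in> space (YM m n i)"
    show "subprob_space (?g y)"
      by (rule prob_space_imp_subprob_space, rule prob_space_PiM) (use dp[OF y] in auto)
    show "sets (?g y) = sets (ZM n i)" by (rule setsg)
  next
    fix A assume A: "A \<in> prod_algebra {..<n i} (\<lambda>_. (borel :: real measure))"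
    then obtain E where AE: "A = Pi\<^sub>E {..<n i} E" and E: "\<And>j. j \<in> {..<n i} \<Longrightarrow> E j \<in> sets borel"
      by (auto simp: prod_algebra_eq_finite)
    have eqm: "emeasure (?g y) A = (\<Prod>j\<in>{..<n i}. \<integral>\<^sup>+t. ennreal (f y t) * indicator (E j) t \<partial>lborel)"
      if y: "y \<in> space (YM m n i)" for y
    proof -
      have "sigma_finite_measure (density lborel (\<lambda>t. ennreal (f y t)))"
        using dp(1)[OF y] by (rule prob_space_imp_sigma_finite)
      then interpret product_sigma_finite "\<lambda>_. density lborel (\<lambda>t. ennreal (f y t))"
        by (simp add: product_sigma_finite_def)
      have "emeasure (?g y) A = (\<Prod>j\<in>{..<n i}. emeasure (density lborel (\<lambda>t. ennreal (f y t))) (E j))"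
        unfolding AE by (rule emeasure_PiM) (use E in auto)
      also have "\<dots> = (\<Prod>j\<in>{..<n i}. \<integral>\<^sup>+t. ennreal (f y t) * indicator (E j) t \<partial>lborel)"
      proof (rule prod.cong)
        fix j assume "j \<in> {..<n i}"
        then have Ej: "E j \<in> sets lborel" using E by simp
        have "(\<lambda>t. ennreal (f y t)) \<in> borel_measurable lborel" using fyt[OF y] by simp
        from emeasure_density[OF this Ej] show "emeasure (density lborel (\<lambda>t. ennreal (f y t))) (E j)
            = (\<integral>\<^sup>+t. ennreal (f y t) * indicator (E j) t \<partial>lborel)" .
      qed simp
      finally show ?thesis .
    qed
    have fm': "(\<lambda>(y, t). ennreal (f y t) * indicator (E j) t) \<in> borel_measurable (YM m n i \<Otimes>\<^sub>M lborel)"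
      if "j \<in> {..<n i}" for j
    proof -
      have fm2: "(\<lambda>(y, t). f y t) \<in> borel_measurable (YM m n i \<Otimes>\<^sub>M lborel)"
        using fm by (simp add: measurable_cong_sets[OF sets_pair_measure_cong[OF refl sets_lborel] refl])
      have Ej[measurable]: "E j \<in> sets borel" using E that by simp
      show ?thesis using fm2 by measurable
    qed
    have "(\<lambda>y. \<Prod>j\<in>{..<n i}. \<integral>\<^sup>+t. ennreal (f y t) * indicator (E j) t \<partial>lborel) \<in> borel_measurable (YM m n i)"
    proof (rule borel_measurable_prod_ennreal)
      fix j assume "j \<in> {..<n i}"
      from lborel.borel_measurable_nn_integral[OF fm'[OF this]]
      show "(\<lambda>y. \<integral>\<^sup>+t. ennreal (f y t) * indicator (E j) t \<partial>lborel) \<in> borel_measurable (YM m n i)" by simp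
    qed
    then show "(\<lambda>y. emeasure (?g y) A) \<in> borel_measurable (YM m n i)"
      by (rule measurable_cong[THEN iffD1, rotated]) (simp add: eqm)
  next
    have "emeasure (?g y) (space (ZM n i)) = 1" if y: "y \<in> space (YM m n i)" for y
    proof -
      interpret prob_space "?g y" by (rule prob_space_PiM) (use dp[OF y] in auto)
      have "space (?g y) = space (ZM n i)" using sets_eq_imp_space_eq[OF setsg] .
      then show ?thesis using emeasure_space_1 by simp
    qed
    then have "(\<lambda>y. emeasure (?g y) (space (ZM n i))) \<in> borel_measurable (YM m n i)
        \<longleftrightarrow> (\<lambda>y. 1::ennreal) \<in> borel_measurable (YM m n i)"
      by (intro measurable_cong) simp
    then show "(\<lambda>y. emeasure (?g y) (space (ZM n i))) \<in> borel_measurable (YM m n i)" by simp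
  qed
qed

lemma flip_combine:
  assumes i: "i < m"
  shows "flipx n {i} s \<circ> combine n i y = combine n i y \<circ> (\<lambda>z j. if j \<in> Dset n s i then - z j else (z j :: real))"
proof (rule ext)
  fix z
  show "(flipx n {i} s \<circ> combine n i y) z = (combine n i y \<circ> (\<lambda>z j. if j \<in> Dset n s i then - z j else z j)) z"
  proof (rule ext)
    fix kj :: "nat \<times> nat"
    obtain k j where kj: "kj = (k, j)" by (cases kj)
    have "j \<in> Dset n s i \<Longrightarrow> j < n i" using Dset_sub[of n s i] by auto
    then show "(flipx n {i} s \<circ> combine n i y) z kj = (combine n i y \<circ> (\<lambda>z j. if j \<in> Dset n s i then - z j else z j)) z kj"
      by (auto simp: kj flipx_def combine_def)
  qed
qed

lemma kernel_flip:
  fixes f :: "(nat \<times> nat \<Rightarrow> real) \<Rightarrow> real \<Rightarrow> real"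
  assumes i: "i < m"
    and fm: "(\<lambda>(y, t). f y t) \<in> borel_measurable (YM m n i \<Otimes>\<^sub>M borel)"
    and y: "y \<in> space (YM m n i)"
    and nn: "\<And>t. 0 \<le> f y t" and sy: "\<And>t. f y (- t) = f y t"
    and one: "(\<integral>\<^sup>+t. ennreal (f y t) \<partial>lborel) = 1"
  shows "distr (distr (PiM {..<n i} (\<lambda>_. density lborel (\<lambda>t. ennreal (f y t)))) (OM m n) (combine n i y)) (OM m n) (flipx n {i} s)
       = distr (PiM {..<n i} (\<lambda>_. density lborel (\<lambda>t. ennreal (f y t)))) (OM m n) (combine n i y)"
proof -
  let ?\<mu> = "density lborel (\<lambda>t. ennreal (f y t))"
  let ?PD = "PiM {..<n i} (\<lambda>_. ?\<mu>)"
  define fz where "fz = (\<lambda>z j. if j \<in> Dset n s i then - z j else (z j :: real))"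
  have fyt: "(\<lambda>t. f y t) \<in> borel_measurable borel"
    using measurable_Pair2[OF fm y] by simp
  note dp = dens_props[OF fyt nn sy one]
  have setsPD: "sets ?PD = sets (ZM n i)" by (rule sets_PiM_cong) simp_all
  have cm0: "combine n i y \<in> measurable (ZM n i) (OM m n)"
    using measurable_Pair2[OF combine_meas[OF i] y] by simp
  have cm: "combine n i y \<in> measurable ?PD (OM m n)"
    using cm0 by (simp add: measurable_cong_sets[OF setsPD refl])
  have flm: "flipx n {i} s \<in> measurable (OM m n) (OM m n)" using i by (intro flipx_meas) auto
  have sp: "space ?\<mu> = UNIV" by simp
  have fzm: "fz \<in> measurable ?PD ?PD"
    unfolding fz_def by (rule fz_meas[OF Dset_sub sp dp(2)])
  have "distr (distr ?PD (OM m n) (combine n i y)) (OM m n) (flipx n {i} s)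
      = distr ?PD (OM m n) (flipx n {i} s \<circ> combine n i y)"
    by (rule distr_distr[OF flm cm])
  also have "\<dots> = distr ?PD (OM m n) (combine n i y \<circ> fz)"
    unfolding fz_def flip_combine[OF i] ..
  also have "\<dots> = distr (distr ?PD ?PD fz) (OM m n) (combine n i y)"
    by (rule distr_distr[OF cm fzm, symmetric])
  also have "distr ?PD ?PD fz = ?PD"
    unfolding fz_def by (rule PiM_flip[OF dp(1) dp(2) dp(3) finite_lessThan Dset_sub])
  finally show ?thesis .
qed

lemma P_flip_single:
  fixes f :: "(nat \<times> nat \<Rightarrow> real) \<Rightarrow> real \<Rightarrow> real"
  assumes i: "i < m"
    and fm: "(\<lambda>(y, t). f y t) \<in> borel_measurable (YM m n i \<Otimes>\<^sub>M borel)"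
    and fy: "\<forall>y \<in> space (YM m n i). (\<forall>t. 0 \<le> f y t \<and> f y (- t) = f y t) \<and> (\<integral>\<^sup>+t. ennreal (f y t) \<partial>lborel) = 1"
    and Peq: "P = bind (distr P (YM m n i) (\<lambda>x. restrict x (other_idx m n i)))
                 (\<lambda>y. distr (PiM {..<n i} (\<lambda>_. density lborel (\<lambda>t. ennreal (f y t)))) (OM m n) (combine n i y))"
  shows "distr P (OM m n) (flipx n {i} s) = P"
proof -
  define M where "M = distr P (YM m n i) (\<lambda>x. restrict x (other_idx m n i))"
  define Nk where "Nk = (\<lambda>y. distr (PiM {..<n i} (\<lambda>_. density lborel (\<lambda>t. ennreal (f y t)))) (OM m n) (combine n i y))"
  have Peq': "P = bind M Nk" using Peq unfolding M_def Nk_def .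
  have setsM: "sets M = sets (YM m n i)" by (simp add: M_def)
  have spM: "space M = space (YM m n i)" using sets_eq_imp_space_eq[OF setsM] .
  have Nkm: "Nk \<in> measurable M (subprob_algebra (OM m n))"
    unfolding Nk_def measurable_cong_sets[OF setsM refl] by (rule kernel_meas[OF i fm fy])
  have ne: "space M \<noteq> {}" unfolding spM by (simp add: space_PiM_empty_iff)
  have flm: "flipx n {i} s \<in> measurable (OM m n) (OM m n)" using i by (intro flipx_meas) auto
  have "distr (bind M Nk) (OM m n) (flipx n {i} s) = bind M (\<lambda>y. distr (Nk y) (OM m n) (flipx n {i} s))"
    by (rule distr_bind[OF Nkm ne flm])
  also have "\<dots> = bind M Nk"
  proof (rule bind_cong[OF refl])
    fix y assume "y \<in> space M"
    then have y: "y \<in> space (YM m n i)" by (simp add: spM)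
    show "distr (Nk y) (OM m n) (flipx n {i} s) = Nk y"
      unfolding Nk_def by (rule kernel_flip[OF i fm y]) (use fy y in auto)
  qed
  finally have X: "distr (bind M Nk) (OM m n) (flipx n {i} s) = bind M Nk" .
  from X[folded Peq'] show ?thesis .
qed

lemma flipx_empty: "flipx n {} s = (\<lambda>x. x)"
  by (auto simp: flipx_def fun_eq_iff)

lemma flipx_insert: "i \<notin> S \<Longrightarrow> flipx n (insert i S) s = flipx n {i} s \<circ> flipx n S s"
  by (auto simp: flipx_def fun_eq_iff)

lemma P_flip_set:
  assumes fin: "finite S" and SH: "S \<subseteq> H" and Hm: "H \<subseteq> {..<m}"
    and setsP: "sets P = sets (OM m n)"
    and single: "\<And>i. i \<in> H \<Longrightarrow> distr P (OM m n) (flipx n {i} s) = P"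
  shows "distr P (OM m n) (flipx n S s) = P"
  using fin SH
proof (induction S rule: finite_induct)
  case empty
  show ?case unfolding flipx_empty by (rule distr_id2) (simp add: setsP)
next
  case (insert i S)
  have Sm: "S \<subseteq> {..<m}" and im: "{i} \<subseteq> {..<m}" using insert.prems Hm by auto
  have gm: "flipx n S s \<in> measurable P (OM m n)"
    using flipx_meas[OF Sm] by (simp add: measurable_cong_sets[OF setsP refl])
  have fm: "flipx n {i} s \<in> measurable (OM m n) (OM m n)" by (rule flipx_meas[OF im])
  have "distr P (OM m n) (flipx n (insert i S) s) = distr P (OM m n) (flipx n {i} s \<circ> flipx n S s)"
    by (simp only: flipx_insert[OF insert.hyps(2)])
  also have "\<dots> = distr (distr P (OM m n) (flipx n S s)) (OM m n) (flipx n {i} s)"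
    by (rule distr_distr[OF fm gm, symmetric])
  also have "distr P (OM m n) (flipx n S s) = P" using insert by auto
  also have "distr P (OM m n) (flipx n {i} s) = P" using insert.prems single by auto
  finally show ?case .
qed

lemma joint_flip:
  fixes P :: "(nat \<times> nat \<Rightarrow> real) measure" and Q :: "(nat \<Rightarrow> nat set) pmf"
  assumes Pprob: "prob_space P" and setsP: "sets P = sets (OM m n)" and Sm: "S \<subseteq> {..<m}"
    and inv: "\<And>s. distr P (OM m n) (flipx n S s) = P"
  shows "(\<lambda>\<omega>. (flipx n S (snd \<omega>) (fst \<omega>), snd \<omega>)) \<in> measurable (P \<Otimes>\<^sub>M measure_pmf Q) (P \<Otimes>\<^sub>M measure_pmf Q)"
    "distr (P \<Otimes>\<^sub>M measure_pmf Q) (P \<Otimes>\<^sub>M measure_pmf Q) (\<lambda>\<omega>. (flipx n S (snd \<omega>) (fst \<omega>), snd \<omega>))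
       = P \<Otimes>\<^sub>M measure_pmf Q"
proof -
  define F where "F = (\<lambda>\<omega>. (flipx n S (snd \<omega>) (fst \<omega>), snd \<omega>))"
  have spP: "space P = space (OM m n)" using sets_eq_imp_space_eq[OF setsP] .
  have comp: "(\<lambda>x. x ij) \<in> borel_measurable P" if "ij \<in> obs_idx m n" for ij
    using that by (simp add: measurable_cong_sets[OF setsP refl])
  have m1: "(\<lambda>\<omega>. flipx n S (snd \<omega>) (fst \<omega>)) \<in> measurable (P \<Otimes>\<^sub>M measure_pmf Q) (OM m n)"
  proof -
    define A where "A ij = {\<omega> :: (nat \<times> nat \<Rightarrow> real) \<times> (nat \<Rightarrow> nat set). fst ij \<in> S \<and> snd ij \<in> Dset n (snd \<omega>) (fst ij)}" for ij :: "nat \<times> nat"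
    define fl where "fl ij \<omega> = (if \<omega> \<in> A ij then - fst \<omega> ij else (fst \<omega> ij :: real))" for ij \<omega>
    have eq: "(\<lambda>\<omega>. flipx n S (snd \<omega>) (fst \<omega>)) = (\<lambda>\<omega> ij. fl ij \<omega>)"
      by (auto simp: flipx_def fl_def A_def fun_eq_iff)
    show ?thesis unfolding eq
    proof (rule measurable_PiM_single')
      fix ij assume ij: "ij \<in> obs_idx m n"
      have c1: "(\<lambda>\<omega>. fst \<omega> ij) \<in> borel_measurable (P \<Otimes>\<^sub>M measure_pmf Q)"
        using measurable_compose[OF measurable_fst comp[OF ij]] .
      have c2: "(\<lambda>\<omega>. - fst \<omega> ij) \<in> borel_measurable (P \<Otimes>\<^sub>M measure_pmf Q)"
        using c1 by simp
      have "A ij \<inter> space (P \<Otimes>\<^sub>M measure_pmf Q) = space P \<times> {s. fst ij \<in> S \<and> snd ij \<in> Dset n s (fst ij)}"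
        by (auto simp: A_def space_pair_measure)
      also have "\<dots> \<in> sets (P \<Otimes>\<^sub>M measure_pmf Q)" by (rule pair_measureI) auto
      finally have As: "A ij \<inter> space (P \<Otimes>\<^sub>M measure_pmf Q) \<in> sets (P \<Otimes>\<^sub>M measure_pmf Q)" .
      show "fl ij \<in> borel_measurable (P \<Otimes>\<^sub>M measure_pmf Q)"
        unfolding fl_def by (rule measurable_If_set[OF c2 c1 As])
    next
      show "(\<lambda>\<omega> ij. fl ij \<omega>) \<in> space (P \<Otimes>\<^sub>M measure_pmf Q) \<rightarrow> (\<Pi>\<^sub>E ij\<in>obs_idx m n. space borel)"
      proof
        fix \<omega> assume "\<omega> \<in> space (P \<Otimes>\<^sub>M measure_pmf Q)"
        then have "fst \<omega> \<in> space (OM m n)" by (auto simp: space_pair_measure spP)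
        then have w: "fst \<omega> \<in> extensional (obs_idx m n)" by (simp add: space_PiM PiE_def)
        have "fl ij \<omega> = undefined" if "ij \<notin> obs_idx m n" for ij
        proof -
          have "\<omega> \<notin> A ij"
            using that Sm Dset_sub[of n "snd \<omega>" "fst ij"] by (cases ij) (auto simp: obs_idx_def A_def)
          moreover have "fst \<omega> ij = undefined" using w that by (rule extensional_arb)
          ultimately show ?thesis unfolding fl_def by (metis (no_types) if_not_P)
        qed
        then show "(\<lambda>ij. fl ij \<omega>) \<in> (\<Pi>\<^sub>E ij\<in>obs_idx m n. space borel)" by (auto simp: PiE_def extensional_def)
      qed
    qed
  qed
  have Fm: "F \<in> measurable (P \<Otimes>\<^sub>M measure_pmf Q) (P \<Otimes>\<^sub>M measure_pmf Q)"
    unfolding F_def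
  proof (rule measurable_Pair)
    show "(\<lambda>\<omega>. flipx n S (snd \<omega>) (fst \<omega>)) \<in> measurable (P \<Otimes>\<^sub>M measure_pmf Q) P"
      using m1 by (simp add: measurable_cong_sets[OF refl setsP])
    show "snd \<in> measurable (P \<Otimes>\<^sub>M measure_pmf Q) (measure_pmf Q)" by (rule measurable_snd)
  qed
  then show "(\<lambda>\<omega>. (flipx n S (snd \<omega>) (fst \<omega>), snd \<omega>)) \<in> measurable (P \<Otimes>\<^sub>M measure_pmf Q) (P \<Otimes>\<^sub>M measure_pmf Q)"
    by (simp add: F_def)
  interpret Pp: prob_space P by fact
  interpret Qp: prob_space "measure_pmf Q" by (rule prob_space_measure_pmf)
  interpret pair_sigma_finite P "measure_pmf Q" by unfold_locales
  have flP: "flipx n S s \<in> measurable P (OM m n)" for s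
    using flipx_meas[OF Sm] by (simp add: measurable_cong_sets[OF setsP refl])
  have "P \<Otimes>\<^sub>M measure_pmf Q = distr (P \<Otimes>\<^sub>M measure_pmf Q) (P \<Otimes>\<^sub>M measure_pmf Q) F"
  proof (rule pair_measure_eqI)
    show "sigma_finite_measure P" "sigma_finite_measure (measure_pmf Q)" by unfold_locales
    show "sets (P \<Otimes>\<^sub>M measure_pmf Q) = sets (distr (P \<Otimes>\<^sub>M measure_pmf Q) (P \<Otimes>\<^sub>M measure_pmf Q) F)" by simp
  next
    fix A B assume A: "A \<in> sets P" and B: "B \<in> sets (measure_pmf Q)"
    have AB: "A \<times> B \<in> sets (P \<Otimes>\<^sub>M measure_pmf Q)" using A B by simp
    define X where "X = F -` (A \<times> B) \<inter> space (P \<Otimes>\<^sub>M measure_pmf Q)"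
    have X: "X \<in> sets (P \<Otimes>\<^sub>M measure_pmf Q)" unfolding X_def using measurable_sets[OF Fm AB] .
    have slice: "emeasure P ((\<lambda>x. (x, s)) -` X) = emeasure P A * indicator B s" for s
    proof (cases "s \<in> B")
      case True
      have "(\<lambda>x. (x, s)) -` X = flipx n S s -` A \<inter> space P"
        using True by (auto simp: X_def F_def space_pair_measure)
      then have "emeasure P ((\<lambda>x. (x, s)) -` X) = emeasure (distr P (OM m n) (flipx n S s)) A"
        using A setsP by (simp add: emeasure_distr[OF flP])
      also have "\<dots> = emeasure P A" by (simp only: inv)
      finally show ?thesis using True by simp
    next
      case False
      have "(\<lambda>x. (x, s)) -` X = {}" using False by (auto simp: X_def F_def space_pair_measure)
      then show ?thesis using False by simp
    qed
    have "emeasure (distr (P \<Otimes>\<^sub>M measure_pmf Q) (P \<Otimes>\<^sub>M measure_pmf Q) F) (A \<times> B) = emeasure (P \<Otimes>\<^sub>M measure_pmf Q) X"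
      unfolding X_def by (rule emeasure_distr[OF Fm AB])
    also have "\<dots> = (\<integral>\<^sup>+s. emeasure P ((\<lambda>x. (x, s)) -` X) \<partial>measure_pmf Q)"
      by (rule emeasure_pair_measure_alt2[OF X])
    also have "\<dots> = (\<integral>\<^sup>+s. emeasure P A * indicator B s \<partial>measure_pmf Q)"
      by (simp only: slice)
    also have "\<dots> = emeasure P A * emeasure (measure_pmf Q) B"
      using B by (rule nn_integral_cmult_indicator)
    finally show "emeasure P A * emeasure (measure_pmf Q) B = emeasure (distr (P \<Otimes>\<^sub>M measure_pmf Q) (P \<Otimes>\<^sub>M measure_pmf Q) F) (A \<times> B)"
      by simp
  qed
  then show "distr (P \<Otimes>\<^sub>M measure_pmf Q) (P \<Otimes>\<^sub>M measure_pmf Q) (\<lambda>\<omega>. (flipx n S (snd \<omega>) (fst \<omega>), snd \<omega>))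
       = P \<Otimes>\<^sub>M measure_pmf Q" by (simp add: F_def)
qed

lemma avg_int_bound:
  fixes \<mu> :: "'a measure" and h :: "'a \<Rightarrow> real" and Fs :: "'b \<Rightarrow> 'a \<Rightarrow> 'a"
  assumes prob: "prob_space \<mu>" and fin: "finite SS" and ne: "SS \<noteq> {}"
    and Fm: "\<And>S. S \<in> SS \<Longrightarrow> Fs S \<in> measurable \<mu> \<mu>"
    and Fd: "\<And>S. S \<in> SS \<Longrightarrow> distr \<mu> \<mu> (Fs S) = \<mu>"
    and AEb: "AE \<omega> in \<mu>. (\<Sum>S\<in>SS. h (Fs S \<omega>)) \<le> real (card SS) * c"
    and c: "0 \<le> c"
  shows "integral\<^sup>L \<mu> h \<le> c"
proof (cases "integrable \<mu> h")
  case True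
  interpret prob_space \<mu> by fact
  have hm: "h \<in> borel_measurable \<mu>" using True by simp
  have intS: "integrable \<mu> (\<lambda>\<omega>. h (Fs S \<omega>))" if "S \<in> SS" for S
    using integrable_distr_eq[OF Fm[OF that] hm] True Fd[OF that] by simp
  have eqS: "(\<integral>\<omega>. h (Fs S \<omega>) \<partial>\<mu>) = integral\<^sup>L \<mu> h" if "S \<in> SS" for S
    using integral_distr[OF Fm[OF that] hm] Fd[OF that] by simp
  have "real (card SS) * integral\<^sup>L \<mu> h = (\<Sum>S\<in>SS. \<integral>\<omega>. h (Fs S \<omega>) \<partial>\<mu>)"
    by (simp add: eqS)
  also have "\<dots> = (\<integral>\<omega>. (\<Sum>S\<in>SS. h (Fs S \<omega>)) \<partial>\<mu>)"
    using Bochner_Integration.integral_sum[where I=SS and M=\<mu> and f="\<lambda>S \<omega>. h (Fs S \<omega>)"] intS by simp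
  also have "\<dots> \<le> (\<integral>\<omega>. real (card SS) * c \<partial>\<mu>)"
    by (rule integral_mono_AE) (use intS AEb in auto)
  also have "\<dots> = real (card SS) * c" by (simp add: prob_space)
  finally have "real (card SS) * integral\<^sup>L \<mu> h \<le> real (card SS) * c" .
  moreover have "0 < real (card SS)" using fin ne by (simp add: card_gt_0_iff)
  ultimately show ?thesis by simp
next
  case False
  then show ?thesis using c by (simp add: not_integrable_integral_eq)
qed

lemma flipG_empty: "flipG {} G = G"
  by (simp add: flipG_def)

lemma flipG_insert: "i \<notin> S \<Longrightarrow> flipG (insert i S) G = flipG {i} (flipG S G)"
  by (auto simp: flipG_def fun_eq_iff)

lemma SENS_G_flipset:
  assumes fin: "finite S" and Sc: "\<forall>i\<in>S. i < m \<and> n i \<ge> 2"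
    and hp: "\<forall>w \<pi>. \<pi> permutes {..<2*m} \<longrightarrow> hsel (w \<circ> \<pi>) = hsel w"
    and h0p: "\<forall>w \<pi>. \<pi> permutes {..<2*m} \<longrightarrow> h0sel (w \<circ> \<pi>) = h0sel w"
  shows "SENS_G opt K hsel h0sel \<gamma> n m (flipx n S s x, s) = flipG S (SENS_G opt K hsel h0sel \<gamma> n m (x, s))"
  using fin Sc
proof (induction S rule: finite_induct)
  case empty
  show ?case by (simp add: flipx_empty flipG_empty)
next
  case (insert i S)
  have "flipx n (insert i S) s x = flipx n {i} s (flipx n S s x)"
    using flipx_insert[OF insert.hyps(2)] by simp
  then have "SENS_G opt K hsel h0sel \<gamma> n m (flipx n (insert i S) s x, s)
      = flipG {i} (SENS_G opt K hsel h0sel \<gamma> n m (flipx n S s x, s))"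
    using SENS_G_swap[of i m n hsel h0sel opt K \<gamma> s "flipx n S s x"] insert.prems hp h0p by simp
  also have "\<dots> = flipG {i} (flipG S (SENS_G opt K hsel h0sel \<gamma> n m (x, s)))"
    using insert by simp
  also have "\<dots> = flipG (insert i S) (SENS_G opt K hsel h0sel \<gamma> n m (x, s))"
    by (rule flipG_insert[symmetric, OF insert.hyps(2)])
  finally show ?case .
qed

theorem corollary1:
  fixes m :: nat and n :: "nat \<Rightarrow> nat"
    and P :: "(nat \<times> nat \<Rightarrow> real) measure"
    and Q :: "(nat \<Rightarrow> nat set) pmf"
    and \<mu> :: "nat \<Rightarrow> real"
    and opt :: sens_option and K :: "real \<Rightarrow> real"
    and hsel h0sel :: "(nat \<Rightarrow> real) \<Rightarrow> real"
    and \<alpha> \<gamma> :: real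
  assumes n_ge2: "\<forall>i<m. n i \<ge> 2"
    and P_prob: "prob_space P"
    and P_sets: "sets P = sets (PiM (obs_idx m n) (\<lambda>_. borel))"
    and model: "\<forall>i<m. \<forall>j<n i. integrable P (\<lambda>x. x (i, j)) \<and> (\<integral>x. x (i, j) \<partial>P) = \<mu> i"
    and null_cond: "\<forall>i \<in> {i. i < m \<and> \<mu> i = 0}. \<exists>f :: (nat \<times> nat \<Rightarrow> real) \<Rightarrow> real \<Rightarrow> real.
           (\<lambda>(y, t). f y t) \<in> borel_measurable (PiM (other_idx m n i) (\<lambda>_. borel) \<Otimes>\<^sub>M borel)
         \<and> (\<forall>y \<in> space (PiM (other_idx m n i) (\<lambda>_. borel)).
               (\<forall>t. 0 \<le> f y t \<and> f y (- t) = f y t) \<and> (\<integral>\<^sup>+t. ennreal (f y t) \<partial>lborel) = 1)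
         \<and> P = bind (distr P (PiM (other_idx m n i) (\<lambda>_. borel)) (\<lambda>x. restrict x (other_idx m n i)))
                 (\<lambda>y. distr (PiM {..<n i} (\<lambda>_. density lborel (f y)))
                            (PiM (obs_idx m n) (\<lambda>_. borel)) (combine n i y))"
    and split: "\<forall>s \<in> set_pmf Q. \<forall>i<m. s i \<subseteq> {..<n i} \<and> card (s i) = (n i + 1) div 2"
    and K_sym: "\<forall>t. K (- t) = K t"
    and K_int: "integrable lborel K" "(\<integral>t. K t \<partial>lborel) = 1"
    and K_mom1: "integrable lborel (\<lambda>t. t * K t)" "(\<integral>t. t * K t \<partial>lborel) = 0"
    and K_mom2: "integrable lborel (\<lambda>t. t\<^sup>2 * K t)"
    and h_pos: "\<forall>w. 0 < hsel w" "\<forall>w. 0 < h0sel w"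
    and h_perm: "\<forall>w \<pi>. \<pi> permutes {..<2*m} \<longrightarrow> hsel (w \<circ> \<pi>) = hsel w"
    and h0_perm: "\<forall>w \<pi>. \<pi> permutes {..<2*m} \<longrightarrow> h0sel (w \<circ> \<pi>) = h0sel w"
    and gamma: "0 < \<gamma>" "\<gamma> < 1/2"
    and alpha: "0 < \<alpha>" "\<alpha> < 1"
    and U_neq: "AE \<omega> in P \<Otimes>\<^sub>M measure_pmf Q.
                  \<forall>i<m. SENS_U opt K hsel h0sel \<gamma> n m \<omega> i \<noteq> SENS_U0 opt K hsel h0sel \<gamma> n m \<omega> i"
  shows "(\<integral>\<omega>. (\<Sum>i \<in> {i. i < m \<and> \<mu> i = 0}.
                   sens_e \<alpha> m (SENS_G opt K hsel h0sel \<gamma> n m \<omega>) i) \<partial>(P \<Otimes>\<^sub>M measure_pmf Q)) \<le> real m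
       \<and> (\<integral>\<omega>. FDP (sens_rej \<alpha> m (SENS_G opt K hsel h0sel \<gamma> n m \<omega>)) {i. i < m \<and> \<mu> i = 0}
               \<partial>(P \<Otimes>\<^sub>M measure_pmf Q)) \<le> \<alpha>"
proof -
  define H where "H = {i. i < m \<and> \<mu> i = 0}"
  have Hm: "H \<subseteq> {..<m}" by (auto simp: H_def)
  have finH: "finite H" using Hm finite_subset by blast
  have prob: "prob_space (P \<Otimes>\<^sub>M measure_pmf Q)"
    by (rule prob_space_pair[OF P_prob prob_space_measure_pmf])
  define Fs where "Fs S \<omega> = (flipx n S (snd \<omega>) (fst \<omega>), snd \<omega>)" for S \<omega>
  have inv_single: "distr P (OM m n) (flipx n {i} s) = P" if i: "i \<in> H" for i s
  proof -
    from null_cond i obtain f :: "(nat \<times> nat \<Rightarrow> real) \<Rightarrow> real \<Rightarrow> real" where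
      f1: "(\<lambda>(y, t). f y t) \<in> borel_measurable (PiM (other_idx m n i) (\<lambda>_. borel) \<Otimes>\<^sub>M borel)"
      and f2: "\<forall>y \<in> space (PiM (other_idx m n i) (\<lambda>_. borel)).
               (\<forall>t. 0 \<le> f y t \<and> f y (- t) = f y t) \<and> (\<integral>\<^sup>+t. ennreal (f y t) \<partial>lborel) = 1"
      and f3: "P = bind (distr P (PiM (other_idx m n i) (\<lambda>_. borel)) (\<lambda>x. restrict x (other_idx m n i)))
                 (\<lambda>y. distr (PiM {..<n i} (\<lambda>_. density lborel (f y)))
                            (PiM (obs_idx m n) (\<lambda>_. borel)) (combine n i y))"
      unfolding H_def by blast
    have im: "i < m" using i by (simp add: H_def)
    show ?thesis by (rule P_flip_single[OF im f1 f2 f3])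
  qed
  have inv_set: "distr P (OM m n) (flipx n S s) = P" if S: "S \<in> Pow H" for S s
  proof (rule P_flip_set[OF _ _ Hm P_sets])
    show "finite S" using S finH finite_subset by auto
    show "S \<subseteq> H" using S by simp
    show "\<And>i. i \<in> H \<Longrightarrow> distr P (OM m n) (flipx n {i} s) = P" by (rule inv_single)
  qed
  have Fm: "Fs S \<in> measurable (P \<Otimes>\<^sub>M measure_pmf Q) (P \<Otimes>\<^sub>M measure_pmf Q)"
    and Fd: "distr (P \<Otimes>\<^sub>M measure_pmf Q) (P \<Otimes>\<^sub>M measure_pmf Q) (Fs S) = P \<Otimes>\<^sub>M measure_pmf Q"
    if S: "S \<in> Pow H" for S
  proof -
    have Sm: "S \<subseteq> {..<m}" using S Hm by auto
    note jf = joint_flip[OF P_prob P_sets Sm inv_set[OF S], of Q]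
    show "Fs S \<in> measurable (P \<Otimes>\<^sub>M measure_pmf Q) (P \<Otimes>\<^sub>M measure_pmf Q)"
      unfolding Fs_def by (rule jf(1))
    show "distr (P \<Otimes>\<^sub>M measure_pmf Q) (P \<Otimes>\<^sub>M measure_pmf Q) (Fs S) = P \<Otimes>\<^sub>M measure_pmf Q"
      unfolding Fs_def by (rule jf(2))
  qed
  have Gflip: "SENS_G opt K hsel h0sel \<gamma> n m (Fs S \<omega>) = flipG S (SENS_G opt K hsel h0sel \<gamma> n m \<omega>)"
    if S: "S \<in> Pow H" for S \<omega>
  proof -
    have fin: "finite S" using S finH finite_subset by auto
    have Sc: "\<forall>i\<in>S. i < m \<and> n i \<ge> 2" using S n_ge2 by (auto simp: H_def)
    from SENS_G_flipset[OF fin Sc h_perm h0_perm, of opt K \<gamma> "snd \<omega>" "fst \<omega>"]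
    show ?thesis by (simp add: Fs_def)
  qed
  have key: "\<forall>i<m. SENS_G opt K hsel h0sel \<gamma> n m \<omega> i \<noteq> 0"
    if A: "\<forall>i<m. SENS_U opt K hsel h0sel \<gamma> n m \<omega> i \<noteq> SENS_U0 opt K hsel h0sel \<gamma> n m \<omega> i" for \<omega>
  proof (intro allI impI)
    fix i assume "i < m"
    then have ne: "SENS_U0 opt K hsel h0sel \<gamma> n m \<omega> i - SENS_U opt K hsel h0sel \<gamma> n m \<omega> i \<noteq> 0" using A by auto
    then have "sgn (SENS_U0 opt K hsel h0sel \<gamma> n m \<omega> i - SENS_U opt K hsel h0sel \<gamma> n m \<omega> i) \<noteq> 0"
      by (simp add: sgn_eq_0_iff)
    moreover have "max (exp (- SENS_U opt K hsel h0sel \<gamma> n m \<omega> i)) (exp (- SENS_U0 opt K hsel h0sel \<gamma> n m \<omega> i)) \<noteq> 0"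
      by (simp add: max_def)
    ultimately show "SENS_G opt K hsel h0sel \<gamma> n m \<omega> i \<noteq> 0"
      by (simp add: SENS_G_def Let_def)
  qed
  have AEnz: "AE \<omega> in P \<Otimes>\<^sub>M measure_pmf Q. \<forall>i<m. SENS_G opt K hsel h0sel \<gamma> n m \<omega> i \<noteq> 0"
    by (rule eventually_mono[OF U_neq key])
  have cardP: "real (card (Pow H)) = 2 ^ card H" using finH by (simp add: card_Pow)
  have part1: "(\<integral>\<omega>. (\<Sum>i\<in>H. sens_e \<alpha> m (SENS_G opt K hsel h0sel \<gamma> n m \<omega>) i) \<partial>(P \<Otimes>\<^sub>M measure_pmf Q)) \<le> real m"
  proof (rule avg_int_bound[OF prob _ _ Fm Fd])
    show "finite (Pow H)" using finH by simp
    show "Pow H \<noteq> {}" by auto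
    show "0 \<le> real m" by simp
    show "AE \<omega> in P \<Otimes>\<^sub>M measure_pmf Q. (\<Sum>S\<in>Pow H. \<Sum>i\<in>H. sens_e \<alpha> m (SENS_G opt K hsel h0sel \<gamma> n m (Fs S \<omega>)) i)
            \<le> real (card (Pow H)) * real m"
      using AEnz
    proof (rule eventually_mono)
      fix \<omega> assume nz: "\<forall>i<m. SENS_G opt K hsel h0sel \<gamma> n m \<omega> i \<noteq> 0"
      have "(\<Sum>S\<in>Pow H. \<Sum>i\<in>H. sens_e \<alpha> m (SENS_G opt K hsel h0sel \<gamma> n m (Fs S \<omega>)) i)
          = (\<Sum>S\<in>Pow H. \<Sum>i\<in>H. sens_e \<alpha> m (flipG S (SENS_G opt K hsel h0sel \<gamma> n m \<omega>)) i)"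
        by (rule sum.cong) (simp_all add: Gflip)
      also have "\<dots> \<le> 2 ^ card H * real m" by (rule flip_bound_e[OF Hm nz])
      finally show "(\<Sum>S\<in>Pow H. \<Sum>i\<in>H. sens_e \<alpha> m (SENS_G opt K hsel h0sel \<gamma> n m (Fs S \<omega>)) i)
            \<le> real (card (Pow H)) * real m" by (simp add: cardP)
    qed
  qed
  have part2: "(\<integral>\<omega>. FDP (sens_rej \<alpha> m (SENS_G opt K hsel h0sel \<gamma> n m \<omega>)) H \<partial>(P \<Otimes>\<^sub>M measure_pmf Q)) \<le> \<alpha>"
  proof (rule avg_int_bound[OF prob _ _ Fm Fd])
    show "finite (Pow H)" using finH by simp
    show "Pow H \<noteq> {}" by auto
    show "0 \<le> \<alpha>" using alpha by simp
    show "AE \<omega> in P \<Otimes>\<^sub>M measure_pmf Q. (\<Sum>S\<in>Pow H. FDP (sens_rej \<alpha> m (SENS_G opt K hsel h0sel \<gamma> n m (Fs S \<omega>))) H)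
            \<le> real (card (Pow H)) * \<alpha>"
      using AEnz
    proof (rule eventually_mono)
      fix \<omega> assume nz: "\<forall>i<m. SENS_G opt K hsel h0sel \<gamma> n m \<omega> i \<noteq> 0"
      have "(\<Sum>S\<in>Pow H. FDP (sens_rej \<alpha> m (SENS_G opt K hsel h0sel \<gamma> n m (Fs S \<omega>))) H)
          = (\<Sum>S\<in>Pow H. FDP (sens_rej \<alpha> m (flipG S (SENS_G opt K hsel h0sel \<gamma> n m \<omega>))) H)"
        by (rule sum.cong) (simp_all add: Gflip)
      also have "\<dots> \<le> 2 ^ card H * \<alpha>" by (rule flip_bound_fdp[OF Hm nz]) (use alpha in simp)
      finally show "(\<Sum>S\<in>Pow H. FDP (sens_rej \<alpha> m (SENS_G opt K hsel h0sel \<gamma> n m (Fs S \<omega>))) H)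
            \<le> real (card (Pow H)) * \<alpha>" by (simp add: cardP)
    qed
  qed
  show ?thesis using part1 part2 by (simp add: H_def)
qed

end
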